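(* Let $k$ be a field of characteristic $\neq 2$, and let $W^+=A\wr T^+$ be as described in the context. Then $W^+$ has the presentation with generators $a_1,\dots,a_m,t_1,\dots,t_n,u_1,\dots,u_n$ subject to the finitely many relations $[a_k,t_{j_1},t_{j_2},\dots,t_{j_s},a_l]=0$ for all $k,l\in\{1,\dots,m\}$, $s\ge 0$ and $1\le j_1<j_2<\dots<j_s\le n$ (for $s=0$ this reads $[a_k,a_l]=0$); $[t_i,t_j]=[t_i,u_j]=[u_i,u_j]=0$ for $1\le i,j\le n$; $[a_k,u_l]=[a_k,t_l,t_l]$ for $1\le k\le m$, $1\le l\le n$.
   Context: Left-normed brackets: $[y_1,\dots,y_n]=[[y_1,\dots,y_{n-1}],y_n]$. Let $A$ be an abelian Lie algebra with basis $a_1,\dots,a_m$ and $T$ an abelian Lie algebra with basis $t_1,\dots,t_n$. Let $U=k[t_1,\dots,t_n]$ (the universal enveloping algebra of $T$), regarded as an abelian Lie algebra under $[u,v]=uv-vu$. Let $u_i=t_i^2\in U$ and let $T^+\subset U$ be the $2n$-dimensional abelian Lie subalgebra spanned by $t_1,\dots,t_n,u_1,\dots,u_n$. Let $B$ be the free right $U$-module with basis $a_1,\dots,a_m$, which is a right Lie module for $T^+$ via $T^+\subset U$. Then $W^+=A\wr T^+$ is $B\oplus T^+$ as a vector space with bracket $[b_1+s_1,b_2+s_2]=(b_1s_2-b_2s_1)+[s_1,s_2]$ for $b_i\in B$, $s_i\in T^+$ (so $[s_1,s_2]=0$). In particular $[a_k,u_l]=a_kt_l^2$. *)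

theory Defs
  imports Main "HOL-Library.Poly_Mapping"
begin

record ('k, 'a) lie_alg =
  lcar  :: "'a set"
  ladd  :: "'a \<Rightarrow> 'a \<Rightarrow> 'a"
  lzero :: "'a"
  lsmul :: "'k \<Rightarrow> 'a \<Rightarrow> 'a"
  lbr   :: "'a \<Rightarrow> 'a \<Rightarrow> 'a"

definition is_lie_alg :: "('k::field, 'a) lie_alg \<Rightarrow> bool" where
  "is_lie_alg L \<longleftrightarrow>
     lzero L \<in> lcar L \<and>
     (\<forall>x\<in>lcar L. \<forall>y\<in>lcar L. ladd L x y \<in> lcar L \<and> lbr L x y \<in> lcar L) \<and>
     (\<forall>c. \<forall>x\<in>lcar L. lsmul L c x \<in> lcar L) \<and>
     (\<forall>x\<in>lcar L. \<forall>y\<in>lcar L. \<forall>z\<in>lcar L. ladd L (ladd L x y) z = ladd L x (ladd L y z)) \<and>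
     (\<forall>x\<in>lcar L. \<forall>y\<in>lcar L. ladd L x y = ladd L y x) \<and>
     (\<forall>x\<in>lcar L. ladd L (lzero L) x = x) \<and>
     (\<forall>x\<in>lcar L. \<exists>y\<in>lcar L. ladd L x y = lzero L) \<and>
     (\<forall>c. \<forall>x\<in>lcar L. \<forall>y\<in>lcar L. lsmul L c (ladd L x y) = ladd L (lsmul L c x) (lsmul L c y)) \<and>
     (\<forall>c d. \<forall>x\<in>lcar L. lsmul L (c + d) x = ladd L (lsmul L c x) (lsmul L d x)) \<and>
     (\<forall>c d. \<forall>x\<in>lcar L. lsmul L (c * d) x = lsmul L c (lsmul L d x)) \<and>
     (\<forall>x\<in>lcar L. lsmul L 1 x = x) \<and>
     (\<forall>x\<in>lcar L. \<forall>y\<in>lcar L. \<forall>z\<in>lcar L. lbr L (ladd L x y) z = ladd L (lbr L x z) (lbr L y z)) \<and>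
     (\<forall>x\<in>lcar L. \<forall>y\<in>lcar L. \<forall>z\<in>lcar L. lbr L x (ladd L y z) = ladd L (lbr L x y) (lbr L x z)) \<and>
     (\<forall>c. \<forall>x\<in>lcar L. \<forall>y\<in>lcar L. lbr L (lsmul L c x) y = lsmul L c (lbr L x y)) \<and>
     (\<forall>c. \<forall>x\<in>lcar L. \<forall>y\<in>lcar L. lbr L x (lsmul L c y) = lsmul L c (lbr L x y)) \<and>
     (\<forall>x\<in>lcar L. lbr L x x = lzero L) \<and>
     (\<forall>x\<in>lcar L. \<forall>y\<in>lcar L. \<forall>z\<in>lcar L.
        ladd L (lbr L (lbr L x y) z) (ladd L (lbr L (lbr L y z) x) (lbr L (lbr L z x) y)) = lzero L)"

definition lie_hom :: "('k, 'a) lie_alg \<Rightarrow> ('k, 'b) lie_alg \<Rightarrow> ('a \<Rightarrow> 'b) \<Rightarrow> bool" where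
  "lie_hom L M f \<longleftrightarrow>
     (\<forall>x\<in>lcar L. f x \<in> lcar M) \<and>
     (\<forall>x\<in>lcar L. \<forall>y\<in>lcar L. f (ladd L x y) = ladd M (f x) (f y)) \<and>
     (\<forall>c. \<forall>x\<in>lcar L. f (lsmul L c x) = lsmul M c (f x)) \<and>
     (\<forall>x\<in>lcar L. \<forall>y\<in>lcar L. f (lbr L x y) = lbr M (f x) (f y))"

inductive_set lie_span :: "('k, 'a) lie_alg \<Rightarrow> 'a set \<Rightarrow> 'a set"
  for L :: "('k, 'a) lie_alg" and X :: "'a set" where
  gen:  "x \<in> X \<Longrightarrow> x \<in> lie_span L X"
| zero: "lzero L \<in> lie_span L X"
| add:  "x \<in> lie_span L X \<Longrightarrow> y \<in> lie_span L X \<Longrightarrow> ladd L x y \<in> lie_span L X"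
| smul: "x \<in> lie_span L X \<Longrightarrow> lsmul L c x \<in> lie_span L X"
| br:   "x \<in> lie_span L X \<Longrightarrow> y \<in> lie_span L X \<Longrightarrow> lbr L x y \<in> lie_span L X"

datatype 'x lterm = LGen 'x | LZero | LBr "'x lterm" "'x lterm"

primrec leval :: "('k, 'a) lie_alg \<Rightarrow> ('x \<Rightarrow> 'a) \<Rightarrow> 'x lterm \<Rightarrow> 'a" where
  "leval L g (LGen x) = g x"
| "leval L g LZero = lzero L"
| "leval L g (LBr p q) = lbr L (leval L g p) (leval L g q)"

definition lnormed :: "'x lterm \<Rightarrow> 'x lterm list \<Rightarrow> 'x lterm" where
  "lnormed y zs = foldl LBr y zs"

text \<open>The Lie algebra W has the presentation with generators X (mapped to W by g)
  and relations R: W is a Lie algebra, g maps X into W, the relations hold in W,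
  the g-images generate W, and for every Lie algebra L (on any carrier type 'b)
  and every assignment h of the generators satisfying the relations there is a
  Lie homomorphism W \<rightarrow> L extending h.  (Uniqueness follows from generation.)
  This is equivalent to the canonical map from the free Lie algebra on X modulo
  the ideal generated by R to W being an isomorphism.\<close>
definition lie_presentation ::
  "('k::field, 'a) lie_alg \<Rightarrow> 'x set \<Rightarrow> ('x \<Rightarrow> 'a) \<Rightarrow> ('x lterm \<times> 'x lterm) set \<Rightarrow> 'b itself \<Rightarrow> bool" where
  "lie_presentation W X g R (_ :: 'b itself) \<longleftrightarrow>
     is_lie_alg W \<and> g ` X \<subseteq> lcar W \<and>
     (\<forall>(p, q)\<in>R. leval W g p = leval W g q) \<and>
     lie_span W (g ` X) = lcar W \<and>
     (\<forall>(L :: ('k, 'b) lie_alg) h. is_lie_alg L \<and> h ` X \<subseteq> lcar L \<and>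
        (\<forall>(p, q)\<in>R. leval L h p = leval L h q) \<longrightarrow>
        (\<exists>f. lie_hom W L f \<and> (\<forall>x\<in>X. f (g x) = h x)))"

type_synonym 'k mpoly = "(nat \<Rightarrow>\<^sub>0 nat) \<Rightarrow>\<^sub>0 'k"

text \<open>U = k[t_1,...,t_n]: polynomials whose monomials only involve variables 1..n\<close>
definition U_car :: "nat \<Rightarrow> 'k::field mpoly set" where
  "U_car n = {p :: 'k mpoly. \<forall>mon\<in>Poly_Mapping.keys p. Poly_Mapping.keys mon \<subseteq> {1..n}}"

definition pconst :: "'k::field \<Rightarrow> 'k mpoly" where
  "pconst c = Poly_Mapping.single 0 c"

definition pvar :: "nat \<Rightarrow> 'k::field mpoly" where
  "pvar i = Poly_Mapping.single (Poly_Mapping.single i 1) 1"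

text \<open>T+ = span of t_i, u_i = t_i^2 (i = 1..n) inside U\<close>
definition Tplus_car :: "nat \<Rightarrow> 'k::field mpoly set" where
  "Tplus_car n = {p. \<exists>c d. p = (\<Sum>i\<in>{1..n}. pconst (c i) * pvar i + pconst (d i) * pvar i ^ 2)}"

text \<open>B = free right U-module with basis a_1..a_m, as coordinate functions\<close>
definition B_car :: "nat \<Rightarrow> nat \<Rightarrow> (nat \<Rightarrow> 'k::field mpoly) set" where
  "B_car m n = {b. (\<forall>j. b j \<in> U_car n) \<and> (\<forall>j. j \<notin> {1..m} \<longrightarrow> b j = 0)}"

definition Wplus :: "nat \<Rightarrow> nat \<Rightarrow> ('k::field, (nat \<Rightarrow> 'k mpoly) \<times> 'k mpoly) lie_alg" where
  "Wplus m n =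
     \<lparr> lcar = {(b, s). b \<in> B_car m n \<and> s \<in> Tplus_car n},
       ladd = (\<lambda>(b1, s1) (b2, s2). (\<lambda>j. b1 j + b2 j, s1 + s2)),
       lzero = (\<lambda>_. 0, 0),
       lsmul = (\<lambda>c (b, s). (\<lambda>j. pconst c * b j, pconst c * s)),
       lbr = (\<lambda>(b1, s1) (b2, s2). (\<lambda>j. b1 j * s2 - b2 j * s1, s1 * s2 - s2 * s1)) \<rparr>"

datatype gen = GA nat | GT nat | GU nat

definition W_gen :: "gen \<Rightarrow> (nat \<Rightarrow> 'k::field mpoly) \<times> 'k mpoly" where
  "W_gen x = (case x of
       GA k \<Rightarrow> (\<lambda>j. if j = k then 1 else 0, 0)
     | GT i \<Rightarrow> (\<lambda>_. 0, pvar i)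
     | GU i \<Rightarrow> (\<lambda>_. 0, pvar i ^ 2))"

definition gens :: "nat \<Rightarrow> nat \<Rightarrow> gen set" where
  "gens m n = GA ` {1..m} \<union> GT ` {1..n} \<union> GU ` {1..n}"

definition rels :: "nat \<Rightarrow> nat \<Rightarrow> (gen lterm \<times> gen lterm) set" where
  "rels m n =
     {(LBr (lnormed (LGen (GA k)) (map (\<lambda>j. LGen (GT j)) js)) (LGen (GA l)), LZero) | k l js.
        k \<in> {1..m} \<and> l \<in> {1..m} \<and> sorted_wrt (<) js \<and> set js \<subseteq> {1..n}}
   \<union> {(LBr (LGen (GT i)) (LGen (GT j)), LZero) | i j. i \<in> {1..n} \<and> j \<in> {1..n}}
   \<union> {(LBr (LGen (GT i)) (LGen (GU j)), LZero) | i j. i \<in> {1..n} \<and> j \<in> {1..n}}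
   \<union> {(LBr (LGen (GU i)) (LGen (GU j)), LZero) | i j. i \<in> {1..n} \<and> j \<in> {1..n}}
   \<union> {(LBr (LGen (GA k)) (LGen (GU l)), LBr (LBr (LGen (GA k)) (LGen (GT l))) (LGen (GT l))) | k l.
        k \<in> {1..m} \<and> l \<in> {1..n}}"

end

theory Submission
  imports Defs "HOL-Algebra.FiniteProduct"
begin


abbreviation lookup where "lookup \<equiv> Poly_Mapping.lookup"
abbreviation keys where "keys \<equiv> Poly_Mapping.keys"
abbreviation single where "single \<equiv> Poly_Mapping.single"

lemma pconst_add: "pconst (a + b) = (pconst a + pconst b :: 'k::field mpoly)"
  by (simp add: pconst_def single_add)
lemma pconst_mult: "pconst (a * b) = (pconst a * pconst b :: 'k::field mpoly)"
  by (simp add: pconst_def mult_single)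
lemma pconst_one[simp]: "pconst 1 = (1 :: 'k::field mpoly)"
  by (simp add: pconst_def)
lemma pconst_zero[simp]: "pconst 0 = (0 :: 'k::field mpoly)"
  by (simp add: pconst_def)
lemma pconst_neg: "pconst (- a) = (- pconst a :: 'k::field mpoly)"
  by (simp add: pconst_def single_uminus)

lemma lookup_pconst_mult: "lookup (pconst c * p) x = c * lookup (p :: 'k::field mpoly) x"
proof -
  have "pconst c * p = Poly_Mapping.map ((*) c) p"
    by (simp add: pconst_def mult_map_scale_conv_mult)
  moreover have "lookup (Poly_Mapping.map ((*) c) p) x = c * lookup p x"
    by transfer (simp add: when_def)
  ultimately show ?thesis by simp
qed

lemma keys_pconst_mult: "keys (pconst c * p) \<subseteq> keys (p :: 'k::field mpoly)"
  by (auto simp: in_keys_iff lookup_pconst_mult)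

lemma U_zero[simp]: "0 \<in> U_car n" by (simp add: U_car_def)
lemma U_one[simp]: "1 \<in> U_car n" by (simp add: U_car_def)
lemma U_add[simp]: "p \<in> U_car n \<Longrightarrow> q \<in> U_car n \<Longrightarrow> p + q \<in> U_car n"
  unfolding U_car_def using keys_add[of p q] by blast
lemma U_neg[simp]: "p \<in> U_car n \<Longrightarrow> - p \<in> U_car n"
  unfolding U_car_def by simp
lemma U_diff[simp]: "p \<in> U_car n \<Longrightarrow> q \<in> U_car n \<Longrightarrow> p - q \<in> U_car n"
  unfolding U_car_def using keys_diff[of p q] by blast
lemma U_mult[simp]: "p \<in> U_car n \<Longrightarrow> q \<in> U_car n \<Longrightarrow> p * q \<in> (U_car n :: 'k::field mpoly set)"
proof -
  assume p: "p \<in> U_car n" and q: "q \<in> U_car n"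
  show ?thesis unfolding U_car_def mem_Collect_eq
  proof (intro ballI)
    fix mo :: "nat \<Rightarrow>\<^sub>0 nat" assume "mo \<in> keys (p * q)"
    then obtain a b where ab: "mo = a + b" "a \<in> keys p" "b \<in> keys q"
      using keys_mult[of p q] by blast
    then show "keys mo \<subseteq> {1..n}" using p q keys_add[of a b] unfolding U_car_def by blast
  qed
qed
lemma U_pconst[simp]: "pconst c \<in> U_car n"
  by (simp add: U_car_def pconst_def)
lemma U_pvar[simp]: "i \<in> {1..n} \<Longrightarrow> pvar i \<in> U_car n"
  by (simp add: U_car_def pvar_def)
lemma U_pow[simp]: "p \<in> U_car n \<Longrightarrow> p ^ k \<in> U_car n"
  by (induction k) auto
lemma U_sum[simp]: "(\<And>i. i \<in> I \<Longrightarrow> f i \<in> U_car n) \<Longrightarrow> sum f I \<in> U_car n"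
  by (induction I rule: infinite_finite_induct) auto

definition tp :: "nat \<Rightarrow> (nat \<Rightarrow> 'k) \<Rightarrow> (nat \<Rightarrow> 'k) \<Rightarrow> 'k::field mpoly" where
  "tp n c d = (\<Sum>i\<in>{1..n}. pconst (c i) * pvar i + pconst (d i) * pvar i ^ 2)"

lemma Tplus_iff: "s \<in> Tplus_car n \<longleftrightarrow> (\<exists>c d. s = tp n c d)"
  by (simp add: Tplus_car_def tp_def)

lemma tp_U: "tp n c d \<in> U_car n"
  unfolding tp_def by (intro U_sum) auto

lemma T_U: "s \<in> Tplus_car n \<Longrightarrow> s \<in> U_car n"
  unfolding Tplus_iff using tp_U by blast

lemma tp_add: "tp n c d + tp n c' d' = tp n (\<lambda>i. c i + c' i) (\<lambda>i. d i + d' i)"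
  unfolding tp_def sum.distrib[symmetric] by (rule sum.cong) (simp_all add: pconst_add distrib_right)

lemma tp_smul: "pconst a * tp n c d = tp n (\<lambda>i. a * c i) (\<lambda>i. a * d i)"
  unfolding tp_def sum_distrib_left by (rule sum.cong) (simp_all add: pconst_mult distrib_left mult.assoc)

lemma tp_zero: "tp n (\<lambda>_. 0) (\<lambda>_. 0) = 0"
  unfolding tp_def by simp

lemma T_add[simp]: assumes "s \<in> Tplus_car n" "t \<in> Tplus_car n" shows "s + t \<in> Tplus_car n"
proof -
  obtain c d where "s = tp n c d" using assms(1) Tplus_iff by blast
  moreover obtain c' d' where "t = tp n c' d'" using assms(2) Tplus_iff by blast
  ultimately show ?thesis unfolding Tplus_iff using tp_add by blast
qed
lemma T_smul[simp]: assumes "s \<in> Tplus_car n" shows "pconst a * s \<in> Tplus_car n"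
proof -
  obtain c d where "s = tp n c d" using assms(1) Tplus_iff by blast
  then show ?thesis unfolding Tplus_iff using tp_smul by blast
qed
lemma T_zero[simp]: "0 \<in> Tplus_car n"
  unfolding Tplus_iff using tp_zero by metis
lemma T_neg[simp]: "s \<in> Tplus_car n \<Longrightarrow> - s \<in> Tplus_car n"
proof -
  assume "s \<in> Tplus_car n"
  then have "pconst (-1) * s \<in> Tplus_car n" by simp
  then show ?thesis by (simp add: pconst_neg)
qed

lemma B_add[simp]: "b1 \<in> B_car m n \<Longrightarrow> b2 \<in> B_car m n \<Longrightarrow> (\<lambda>j. b1 j + b2 j) \<in> B_car m n"
  by (simp add: B_car_def)

lemma Wcar: "x \<in> lcar (Wplus m n) \<longleftrightarrow> fst x \<in> B_car m n \<and> snd x \<in> Tplus_car n"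
  by (cases x) (simp add: Wplus_def)

lemma W_simps[simp]:
  "lcar (Wplus m n) = {(b, s). b \<in> B_car m n \<and> s \<in> Tplus_car n}"
  "ladd (Wplus m n) (b1, s1) (b2, s2) = (\<lambda>j. b1 j + b2 j, s1 + s2)"
  "lzero (Wplus m n) = (\<lambda>_. 0, 0)"
  "lsmul (Wplus m n) c (b, s) = (\<lambda>j. pconst c * b j, pconst c * s)"
  "lbr (Wplus m n) (b1, s1) (b2, s2) = (\<lambda>j. b1 j * s2 - b2 j * s1, s1 * s2 - s2 * s1)"
  by (simp_all add: Wplus_def)

lemma W_lie: "is_lie_alg (Wplus m n :: ('k::field, (nat \<Rightarrow> 'k mpoly) \<times> 'k mpoly) lie_alg)"
  unfolding is_lie_alg_def
proof (intro conjI)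
  let ?W = "Wplus m n :: ('k::field, (nat \<Rightarrow> 'k mpoly) \<times> 'k mpoly) lie_alg"
  show "lzero ?W \<in> lcar ?W" by (simp add: B_car_def)
  show "\<forall>x\<in>lcar ?W. \<forall>y\<in>lcar ?W. ladd ?W x y \<in> lcar ?W \<and> lbr ?W x y \<in> lcar ?W"
    by (auto simp: B_car_def T_U)
  show "\<forall>c. \<forall>x\<in>lcar ?W. lsmul ?W c x \<in> lcar ?W"
    by (auto simp: B_car_def)
  show "\<forall>x\<in>lcar ?W. \<forall>y\<in>lcar ?W. \<forall>z\<in>lcar ?W. ladd ?W (ladd ?W x y) z = ladd ?W x (ladd ?W y z)"
    by (auto simp: algebra_simps)
  show "\<forall>x\<in>lcar ?W. \<forall>y\<in>lcar ?W. ladd ?W x y = ladd ?W y x"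
    by (auto simp: algebra_simps)
  show "\<forall>x\<in>lcar ?W. ladd ?W (lzero ?W) x = x"
    by auto
  show "\<forall>x\<in>lcar ?W. \<exists>y\<in>lcar ?W. ladd ?W x y = lzero ?W"
  proof
    fix x assume x: "x \<in> lcar ?W"
    obtain b s where bs: "x = (b, s)" by (cases x)
    show "\<exists>y\<in>lcar ?W. ladd ?W x y = lzero ?W"
      by (rule bexI[of _ "(\<lambda>j. - b j, - s)"]) (use x bs in \<open>auto simp: B_car_def\<close>)
  qed
  show "\<forall>c. \<forall>x\<in>lcar ?W. \<forall>y\<in>lcar ?W. lsmul ?W c (ladd ?W x y) = ladd ?W (lsmul ?W c x) (lsmul ?W c y)"
    by (auto simp: algebra_simps)
  show "\<forall>c d. \<forall>x\<in>lcar ?W. lsmul ?W (c + d) x = ladd ?W (lsmul ?W c x) (lsmul ?W d x)"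
    by (auto simp: algebra_simps pconst_add)
  show "\<forall>c d. \<forall>x\<in>lcar ?W. lsmul ?W (c * d) x = lsmul ?W c (lsmul ?W d x)"
    by (auto simp: algebra_simps pconst_mult)
  show "\<forall>x\<in>lcar ?W. lsmul ?W 1 x = x"
    by auto
  show "\<forall>x\<in>lcar ?W. \<forall>y\<in>lcar ?W. \<forall>z\<in>lcar ?W. lbr ?W (ladd ?W x y) z = ladd ?W (lbr ?W x z) (lbr ?W y z)"
    by (auto simp: algebra_simps)
  show "\<forall>x\<in>lcar ?W. \<forall>y\<in>lcar ?W. \<forall>z\<in>lcar ?W. lbr ?W x (ladd ?W y z) = ladd ?W (lbr ?W x y) (lbr ?W x z)"
    by (auto simp: algebra_simps)
  show "\<forall>c. \<forall>x\<in>lcar ?W. \<forall>y\<in>lcar ?W. lbr ?W (lsmul ?W c x) y = lsmul ?W c (lbr ?W x y)"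
    by (auto simp: algebra_simps)
  show "\<forall>c. \<forall>x\<in>lcar ?W. \<forall>y\<in>lcar ?W. lbr ?W x (lsmul ?W c y) = lsmul ?W c (lbr ?W x y)"
    by (auto simp: algebra_simps)
  show "\<forall>x\<in>lcar ?W. lbr ?W x x = lzero ?W"
    by (auto simp: algebra_simps)
  show "\<forall>x\<in>lcar ?W. \<forall>y\<in>lcar ?W. \<forall>z\<in>lcar ?W.
        ladd ?W (lbr ?W (lbr ?W x y) z) (ladd ?W (lbr ?W (lbr ?W y z) x) (lbr ?W (lbr ?W z x) y)) = lzero ?W"
    by (auto simp: algebra_simps)
qed



lemma update_single: "a \<notin> keys f \<Longrightarrow> Poly_Mapping.update a b f = single a b + (f :: 'a \<Rightarrow>\<^sub>0 'b::comm_monoid_add)"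
  by (rule poly_mapping_eqI) (auto simp: lookup_update lookup_add lookup_single in_keys_iff when_def)

lemma poly_induct:
  assumes "P 0" "\<And>p a c. P p \<Longrightarrow> a \<notin> keys p \<Longrightarrow> c \<noteq> 0 \<Longrightarrow> P (single a c + p)"
  shows "P (p :: 'a \<Rightarrow>\<^sub>0 'b::comm_monoid_add)"
proof (induction p rule: update_induct)
  case const then show ?case using assms(1) .
next
  case (update f a b) then show ?case using assms(2) update_single by metis
qed

lemma mon_induct:
  assumes "P 0" "\<And>mo i. P mo \<Longrightarrow> P (mo + single i (1::nat))"
  shows "P mo"
proof (induction mo rule: poly_induct)
  case 1 then show ?case using assms(1) .
next
  case (2 p a c)
  have "P (single a k + p)" for k
  proof (induction k)
    case 0 then show ?case using 2 by simp
  next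
    case (Suc k)
    have "single a (Suc k) + p = (single a k + p) + single a 1"
      by (simp add: single_add[symmetric] add.commute add.left_commute)
    then show ?case using assms(2) Suc by metis
  qed
  then show ?case .
qed

lemma pvar_sq: "pvar i ^ 2 = (single (single i 2) 1 :: 'k::field mpoly)"
  by (simp add: pvar_def power2_eq_square mult_single single_add[symmetric] numeral_2_eq_2)

lemma tp_single: "i \<in> {1..n} \<Longrightarrow>
  tp n (\<lambda>j. if j = i then a else 0) (\<lambda>j. if j = i then b else 0) = pconst a * pvar i + pconst b * (pvar i ^ 2 :: 'k::field mpoly)"
proof -
  assume i: "i \<in> {1..n}"
  have "tp n (\<lambda>j. if j = i then a else 0) (\<lambda>j. if j = i then b else 0) =
     (\<Sum>j\<in>{1..n}. if j = i then pconst a * pvar i + pconst b * (pvar i ^ 2 :: 'k::field mpoly) else 0)"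
    unfolding tp_def by (rule sum.cong) auto
  also have "\<dots> = pconst a * pvar i + pconst b * pvar i ^ 2" using i by simp
  finally show ?thesis .
qed

lemma pvar_T: "i \<in> {1..n} \<Longrightarrow> (pvar i :: 'k::field mpoly) \<in> Tplus_car n"
  using tp_single[of i n 1 0] unfolding Tplus_iff by (metis add.right_neutral mult_1 mult_zero_left pconst_one pconst_zero)

lemma pvar2_T: "i \<in> {1..n} \<Longrightarrow> (pvar i ^ 2 :: 'k::field mpoly) \<in> Tplus_car n"
  using tp_single[of i n 0 1] unfolding Tplus_iff by (metis add_0 mult_1 mult_zero_left pconst_one pconst_zero)

lemma gens_W: "x \<in> gens m n \<Longrightarrow> (W_gen x :: (nat \<Rightarrow> 'k::field mpoly) \<times> 'k mpoly) \<in> lcar (Wplus m n)"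
  by (auto simp: gens_def W_gen_def B_car_def pvar_T pvar2_T)

lemma snd_br: "snd (lbr (Wplus m n) x y) = 0"
  by (cases x, cases y) simp

lemma leval_lnormed: "leval L g (lnormed y zs) = foldl (\<lambda>a z. lbr L a (leval L g z)) (leval L g y) zs"
  unfolding lnormed_def by (induction zs arbitrary: y) auto

lemma snd_foldl: "snd x0 = 0 \<Longrightarrow> snd (foldl (\<lambda>a z. lbr (Wplus m n) a (f z)) x0 zs) = 0"
  by (induction zs arbitrary: x0) (auto simp: snd_br)

lemma W_rels: "\<forall>(p, q)\<in>rels m n. leval (Wplus m n :: ('k::field, (nat \<Rightarrow> 'k mpoly) \<times> 'k mpoly) lie_alg) W_gen p
   = leval (Wplus m n :: ('k::field, (nat \<Rightarrow> 'k mpoly) \<times> 'k mpoly) lie_alg) W_gen q"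
proof -
  let ?W = "Wplus m n :: ('k::field, (nat \<Rightarrow> 'k mpoly) \<times> 'k mpoly) lie_alg"
  have 1: "leval ?W W_gen (LBr (lnormed (LGen (GA k)) (map (\<lambda>j. LGen (GT j)) js)) (LGen (GA l))) = lzero ?W" for k l js
  proof -
    let ?X = "foldl (\<lambda>a z. lbr ?W a (leval ?W W_gen z)) (W_gen (GA k)) (map (\<lambda>j. LGen (GT j)) js)"
    have "snd ?X = 0" by (rule snd_foldl) (simp add: W_gen_def)
    then obtain b where "?X = (b, 0)" by (metis prod.collapse)
    then show ?thesis by (simp add: leval_lnormed W_gen_def)
  qed
  have 2: "leval ?W W_gen (LBr (LGen (GA k)) (LGen (GU l))) =
           leval ?W W_gen (LBr (LBr (LGen (GA k)) (LGen (GT l))) (LGen (GT l)))" for k l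
    by (auto simp: W_gen_def power2_eq_square algebra_simps)
  show ?thesis unfolding rels_def
    using 1 2 by (auto simp: W_gen_def)
qed

definition ea :: "nat \<Rightarrow> 'k::field mpoly \<Rightarrow> (nat \<Rightarrow> 'k mpoly) \<times> 'k mpoly" where
  "ea a p = (\<lambda>k. if k = a then p else 0, 0)"

lemma keys_add_nat: "keys (mo + single i (1::nat)) = insert i (keys mo)"
  by (auto simp: in_keys_iff lookup_add lookup_single when_def split: if_splits)

lemma mono_in:
  assumes a: "a \<in> {1..m}"
  shows "keys mo \<subseteq> {1..n} \<longrightarrow> ea a (single mo (1::'k::field)) \<in> lie_span (Wplus m n) (W_gen ` gens m n)"
proof (induction mo rule: mon_induct)
  case 1
  have "ea a (single 0 (1::'k::field)) = W_gen (GA a)" by (auto simp: ea_def W_gen_def)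
  moreover have "GA a \<in> gens m n" using a by (simp add: gens_def)
  ultimately show ?case by (auto intro: lie_span.gen)
next
  case (2 mo i)
  show ?case
  proof
    assume k: "keys (mo + single i 1) \<subseteq> {1..n}"
    then have i: "i \<in> {1..n}" and km: "keys mo \<subseteq> {1..n}" using keys_add_nat[of mo i] by auto
    have eq: "ea a (single (mo + single i 1) (1::'k::field)) = lbr (Wplus m n) (ea a (single mo (1::'k::field))) (W_gen (GT i))"
      by (auto simp: ea_def W_gen_def pvar_def mult_single)
    have g: "W_gen (GT i) \<in> lie_span (Wplus m n) (W_gen ` gens m n)"
      using i by (auto simp: gens_def intro: lie_span.gen)
    have ih: "ea a (single mo (1::'k::field)) \<in> lie_span (Wplus m n) (W_gen ` gens m n)"
      using 2 km by blast
    show "ea a (single (mo + single i 1) (1::'k::field)) \<in> lie_span (Wplus m n) (W_gen ` gens m n)"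
      unfolding eq by (rule lie_span.br[OF ih g])
  qed
qed

lemma poly_in:
  assumes a: "a \<in> {1..m}"
  shows "p \<in> U_car n \<longrightarrow> ea a (p :: 'k::field mpoly) \<in> lie_span (Wplus m n) (W_gen ` gens m n)"
proof (induction p rule: poly_induct)
  case 1
  have "ea a 0 = lzero (Wplus m n :: ('k::field, (nat \<Rightarrow> 'k mpoly) \<times> 'k mpoly) lie_alg)"
    by (auto simp: ea_def)
  moreover have "lzero (Wplus m n :: ('k::field, (nat \<Rightarrow> 'k mpoly) \<times> 'k mpoly) lie_alg) \<in> lie_span (Wplus m n) (W_gen ` gens m n)"
    by (rule lie_span.zero)
  ultimately show ?case by simp
next
  case (2 q mo c)
  show ?case
  proof
    assume u: "single mo c + q \<in> U_car n"
    have ks: "keys (single mo c + q) = insert mo (keys q)"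
      using 2 by (auto simp: in_keys_iff lookup_add lookup_single when_def split: if_splits)
    have km: "keys mo \<subseteq> {1..n}" and qU: "q \<in> U_car n"
      using u ks unfolding U_car_def by auto
    have "ea a (single mo c + q) = ladd (Wplus m n) (lsmul (Wplus m n) c (ea a (single mo 1))) (ea a q)"
      by (auto simp: ea_def pconst_def mult_single)
    then show "ea a (single mo c + q) \<in> lie_span (Wplus m n) (W_gen ` gens m n)"
      using 2 qU mono_in[OF a] km by (auto intro: lie_span.add lie_span.smul)
  qed
qed

lemma B_in:
  assumes b: "b \<in> B_car m n" and J: "J \<subseteq> {1..m}"
  shows "((\<lambda>k. if k \<in> J then b k else 0), 0) \<in> lie_span (Wplus m n) (W_gen ` gens m n)"
  using J
proof (induction J rule: infinite_finite_induct)
  case (infinite A) then show ?case using finite_subset by blast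
next
  case empty
  have "((\<lambda>k. if k \<in> {} then b k else 0), 0) = lzero (Wplus m n)" by auto
  then show ?case by (metis lie_span.zero)
next
  case (insert x F)
  have "((\<lambda>k. if k \<in> insert x F then b k else 0), 0) =
        ladd (Wplus m n) (ea x (b x)) ((\<lambda>k. if k \<in> F then b k else 0), 0)"
    using insert by (auto simp: ea_def)
  moreover have "ea x (b x) \<in> lie_span (Wplus m n) (W_gen ` gens m n)"
    using poly_in[where a=x and p="b x"] insert b by (auto simp: B_car_def)
  ultimately show ?case using insert by (auto intro: lie_span.add)
qed

lemma T_in:
  assumes I: "I \<subseteq> {1..n}"
  shows "((\<lambda>_. 0), (\<Sum>i\<in>I. pconst (c i) * pvar i + pconst (d i) * pvar i ^ 2)) \<in> lie_span (Wplus m n :: ('k::field, (nat \<Rightarrow> 'k mpoly) \<times> 'k mpoly) lie_alg) (W_gen ` gens m n)"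
  using I
proof (induction I rule: infinite_finite_induct)
  case (infinite A) then show ?case using finite_subset by blast
next
  case empty
  have "((\<lambda>_. 0), (\<Sum>i\<in>{}. pconst (c i) * pvar i + pconst (d i) * pvar i ^ 2)) = lzero (Wplus m n :: ('k::field, (nat \<Rightarrow> 'k mpoly) \<times> 'k mpoly) lie_alg)" by auto
  then show ?case by (metis lie_span.zero)
next
  case (insert x F)
  let ?S = "lie_span (Wplus m n :: ('k::field, (nat \<Rightarrow> 'k mpoly) \<times> 'k mpoly) lie_alg) (W_gen ` gens m n)"
  have x: "x \<in> {1..n}" using insert by auto
  have g1: "W_gen (GT x) \<in> ?S" using x by (auto simp: gens_def intro: lie_span.gen)
  have g2: "W_gen (GU x) \<in> ?S" using x by (auto simp: gens_def intro: lie_span.gen)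
  have "((\<lambda>_. 0), (\<Sum>i\<in>insert x F. pconst (c i) * pvar i + pconst (d i) * pvar i ^ 2)) =
    ladd (Wplus m n) (ladd (Wplus m n) (lsmul (Wplus m n) (c x) (W_gen (GT x))) (lsmul (Wplus m n) (d x) (W_gen (GU x))))
       ((\<lambda>_. 0), (\<Sum>i\<in>F. pconst (c i) * pvar i + pconst (d i) * pvar i ^ 2))"
    using insert by (auto simp: W_gen_def)
  then show ?case using insert g1 g2 by (auto intro: lie_span.add lie_span.smul)
qed

lemma W_add_cl: "x \<in> lcar (Wplus m n) \<Longrightarrow> y \<in> lcar (Wplus m n) \<Longrightarrow> ladd (Wplus m n) x y \<in> lcar (Wplus m n)"
  by (cases x; cases y) (auto simp: B_car_def)
lemma W_sm_cl: "x \<in> lcar (Wplus m n) \<Longrightarrow> lsmul (Wplus m n) c x \<in> lcar (Wplus m n)"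
  by (cases x) (auto simp: B_car_def)
lemma W_br_cl: "x \<in> lcar (Wplus m n) \<Longrightarrow> y \<in> lcar (Wplus m n) \<Longrightarrow> lbr (Wplus m n) x y \<in> lcar (Wplus m n)"
  by (cases x; cases y) (auto simp: B_car_def T_U)

lemma W_span: "lie_span (Wplus m n :: ('k::field, (nat \<Rightarrow> 'k mpoly) \<times> 'k mpoly) lie_alg) (W_gen ` gens m n)
   = lcar (Wplus m n)"
proof
  let ?W = "Wplus m n :: ('k::field, (nat \<Rightarrow> 'k mpoly) \<times> 'k mpoly) lie_alg"
  show "lie_span ?W (W_gen ` gens m n) \<subseteq> lcar ?W"
  proof
    fix x assume "x \<in> lie_span ?W (W_gen ` gens m n)"
    then show "x \<in> lcar ?W"
    proof induction
      case (gen x) then show ?case using gens_W by blast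
    next
      case zero then show ?case by (simp add: B_car_def)
    next
      case (add x y) then show ?case using W_add_cl by blast
    next
      case (smul x c) then show ?case using W_sm_cl by blast
    next
      case (br x y) then show ?case using W_br_cl by blast
    qed
  qed
  show "lcar ?W \<subseteq> lie_span ?W (W_gen ` gens m n)"
  proof
    fix x assume x: "x \<in> lcar ?W"
    obtain b s where bs: "x = (b, s)" by (cases x)
    have b: "b \<in> B_car m n" and s: "s \<in> Tplus_car n" using x bs by auto
    obtain c d where sd: "s = (\<Sum>i\<in>{1..n}. pconst (c i) * pvar i + pconst (d i) * pvar i ^ 2)"
      using s unfolding Tplus_car_def by blast
    have "(\<lambda>k. if k \<in> {1..m} then b k else 0) = b" using b by (auto simp: B_car_def)
    then have eq: "x = ladd ?W ((\<lambda>k. if k \<in> {1..m} then b k else 0), 0) ((\<lambda>_. 0), s)"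
      using bs by simp
    have A: "((\<lambda>k. if k \<in> {1..m} then b k else 0), 0) \<in> lie_span ?W (W_gen ` gens m n)"
      by (rule B_in[OF b]) simp
    have B: "((\<lambda>_. 0), s) \<in> lie_span ?W (W_gen ` gens m n)"
      unfolding sd by (rule T_in) simp
    show "x \<in> lie_span ?W (W_gen ` gens m n)"
      unfolding eq by (rule lie_span.add[OF A B])
  qed
qed



locale lie =
  fixes L :: "('k::field, 'b) lie_alg"
  assumes lie: "is_lie_alg L"
begin

abbreviation C where "C \<equiv> lcar L"
abbreviation pl (infixl "\<boxplus>" 65) where "x \<boxplus> y \<equiv> ladd L x y"
abbreviation sm (infixr "\<star>" 75) where "c \<star> x \<equiv> lsmul L c x"
abbreviation br where "br x y \<equiv> lbr L x y"
abbreviation z0 where "z0 \<equiv> lzero L"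

lemma ax: "lzero L \<in> lcar L \<and>
     (\<forall>x\<in>lcar L. \<forall>y\<in>lcar L. ladd L x y \<in> lcar L \<and> lbr L x y \<in> lcar L) \<and>
     (\<forall>c. \<forall>x\<in>lcar L. lsmul L c x \<in> lcar L) \<and>
     (\<forall>x\<in>lcar L. \<forall>y\<in>lcar L. \<forall>z\<in>lcar L. ladd L (ladd L x y) z = ladd L x (ladd L y z)) \<and>
     (\<forall>x\<in>lcar L. \<forall>y\<in>lcar L. ladd L x y = ladd L y x) \<and>
     (\<forall>x\<in>lcar L. ladd L (lzero L) x = x) \<and>
     (\<forall>x\<in>lcar L. \<exists>y\<in>lcar L. ladd L x y = lzero L) \<and>
     (\<forall>c. \<forall>x\<in>lcar L. \<forall>y\<in>lcar L. lsmul L c (ladd L x y) = ladd L (lsmul L c x) (lsmul L c y)) \<and>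
     (\<forall>c d. \<forall>x\<in>lcar L. lsmul L (c + d) x = ladd L (lsmul L c x) (lsmul L d x)) \<and>
     (\<forall>c d. \<forall>x\<in>lcar L. lsmul L (c * d) x = lsmul L c (lsmul L d x)) \<and>
     (\<forall>x\<in>lcar L. lsmul L 1 x = x) \<and>
     (\<forall>x\<in>lcar L. \<forall>y\<in>lcar L. \<forall>z\<in>lcar L. lbr L (ladd L x y) z = ladd L (lbr L x z) (lbr L y z)) \<and>
     (\<forall>x\<in>lcar L. \<forall>y\<in>lcar L. \<forall>z\<in>lcar L. lbr L x (ladd L y z) = ladd L (lbr L x y) (lbr L x z)) \<and>
     (\<forall>c. \<forall>x\<in>lcar L. \<forall>y\<in>lcar L. lbr L (lsmul L c x) y = lsmul L c (lbr L x y)) \<and>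
     (\<forall>c. \<forall>x\<in>lcar L. \<forall>y\<in>lcar L. lbr L x (lsmul L c y) = lsmul L c (lbr L x y)) \<and>
     (\<forall>x\<in>lcar L. lbr L x x = lzero L) \<and>
     (\<forall>x\<in>lcar L. \<forall>y\<in>lcar L. \<forall>z\<in>lcar L.
        ladd L (lbr L (lbr L x y) z) (ladd L (lbr L (lbr L y z) x) (lbr L (lbr L z x) y)) = lzero L)"
  using lie unfolding is_lie_alg_def .

lemma C_zero[simp]: "z0 \<in> C" using ax[THEN conjunct1] .
lemma C_add[simp]: "x \<in> C \<Longrightarrow> y \<in> C \<Longrightarrow> x \<boxplus> y \<in> C" using ax[THEN conjunct2, THEN conjunct1] by blast
lemma C_br[simp]: "x \<in> C \<Longrightarrow> y \<in> C \<Longrightarrow> br x y \<in> C" using ax[THEN conjunct2, THEN conjunct1] by blast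
lemma C_sm[simp]: "x \<in> C \<Longrightarrow> c \<star> x \<in> C" using ax[THEN conjunct2, THEN conjunct2, THEN conjunct1] by blast
lemma add_assoc: "x \<in> C \<Longrightarrow> y \<in> C \<Longrightarrow> z \<in> C \<Longrightarrow> (x \<boxplus> y) \<boxplus> z = x \<boxplus> (y \<boxplus> z)"
  using ax[THEN conjunct2, THEN conjunct2, THEN conjunct2, THEN conjunct1] by blast
lemma add_comm: "x \<in> C \<Longrightarrow> y \<in> C \<Longrightarrow> x \<boxplus> y = y \<boxplus> x"
  using ax[THEN conjunct2, THEN conjunct2, THEN conjunct2, THEN conjunct2, THEN conjunct1] by blast
lemma add_lcomm: "x \<in> C \<Longrightarrow> y \<in> C \<Longrightarrow> z \<in> C \<Longrightarrow> x \<boxplus> (y \<boxplus> z) = y \<boxplus> (x \<boxplus> z)"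
  using add_assoc[of x y z] add_assoc[of y x z] add_comm[of x y] by simp
lemmas add_ac = add_assoc add_comm add_lcomm
lemma zero_add[simp]: "x \<in> C \<Longrightarrow> z0 \<boxplus> x = x"
  using ax[THEN conjunct2, THEN conjunct2, THEN conjunct2, THEN conjunct2, THEN conjunct2, THEN conjunct1] by blast
lemma add_zero[simp]: "x \<in> C \<Longrightarrow> x \<boxplus> z0 = x"
  using add_comm[of x z0] by simp
lemma ex_inv: "x \<in> C \<Longrightarrow> \<exists>y\<in>C. x \<boxplus> y = z0"
  using ax[THEN conjunct2, THEN conjunct2, THEN conjunct2, THEN conjunct2, THEN conjunct2, THEN conjunct2, THEN conjunct1] by blast
lemma sm_add: "x \<in> C \<Longrightarrow> y \<in> C \<Longrightarrow> c \<star> (x \<boxplus> y) = c \<star> x \<boxplus> c \<star> y"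
  using ax[THEN conjunct2, THEN conjunct2, THEN conjunct2, THEN conjunct2, THEN conjunct2, THEN conjunct2, THEN conjunct2, THEN conjunct1] by blast
lemma add_sm: "x \<in> C \<Longrightarrow> (c + d) \<star> x = c \<star> x \<boxplus> d \<star> x"
  using ax[THEN conjunct2, THEN conjunct2, THEN conjunct2, THEN conjunct2, THEN conjunct2, THEN conjunct2, THEN conjunct2, THEN conjunct2, THEN conjunct1] by blast
lemma sm_sm[simp]: "x \<in> C \<Longrightarrow> c \<star> (d \<star> x) = (c * d) \<star> x"
  using ax[THEN conjunct2, THEN conjunct2, THEN conjunct2, THEN conjunct2, THEN conjunct2, THEN conjunct2, THEN conjunct2, THEN conjunct2, THEN conjunct2, THEN conjunct1] by metis
lemma one_sm[simp]: "x \<in> C \<Longrightarrow> 1 \<star> x = x"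
  using ax[THEN conjunct2, THEN conjunct2, THEN conjunct2, THEN conjunct2, THEN conjunct2, THEN conjunct2, THEN conjunct2, THEN conjunct2, THEN conjunct2, THEN conjunct2, THEN conjunct1] by blast
lemma br_add_l: "x \<in> C \<Longrightarrow> y \<in> C \<Longrightarrow> z \<in> C \<Longrightarrow> br (x \<boxplus> y) z = br x z \<boxplus> br y z"
  using ax[THEN conjunct2, THEN conjunct2, THEN conjunct2, THEN conjunct2, THEN conjunct2, THEN conjunct2, THEN conjunct2, THEN conjunct2, THEN conjunct2, THEN conjunct2, THEN conjunct2, THEN conjunct1] by blast
lemma br_add_r: "x \<in> C \<Longrightarrow> y \<in> C \<Longrightarrow> z \<in> C \<Longrightarrow> br x (y \<boxplus> z) = br x y \<boxplus> br x z"
  using ax[THEN conjunct2, THEN conjunct2, THEN conjunct2, THEN conjunct2, THEN conjunct2, THEN conjunct2, THEN conjunct2, THEN conjunct2, THEN conjunct2, THEN conjunct2, THEN conjunct2, THEN conjunct2, THEN conjunct1] by blast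
lemma br_sm_l: "x \<in> C \<Longrightarrow> y \<in> C \<Longrightarrow> br (c \<star> x) y = c \<star> br x y"
  using ax[THEN conjunct2, THEN conjunct2, THEN conjunct2, THEN conjunct2, THEN conjunct2, THEN conjunct2, THEN conjunct2, THEN conjunct2, THEN conjunct2, THEN conjunct2, THEN conjunct2, THEN conjunct2, THEN conjunct2, THEN conjunct1] by blast
lemma br_sm_r: "x \<in> C \<Longrightarrow> y \<in> C \<Longrightarrow> br x (c \<star> y) = c \<star> br x y"
  using ax[THEN conjunct2, THEN conjunct2, THEN conjunct2, THEN conjunct2, THEN conjunct2, THEN conjunct2, THEN conjunct2, THEN conjunct2, THEN conjunct2, THEN conjunct2, THEN conjunct2, THEN conjunct2, THEN conjunct2, THEN conjunct2, THEN conjunct1] by blast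
lemma br_self[simp]: "x \<in> C \<Longrightarrow> br x x = z0"
  using ax[THEN conjunct2, THEN conjunct2, THEN conjunct2, THEN conjunct2, THEN conjunct2, THEN conjunct2, THEN conjunct2, THEN conjunct2, THEN conjunct2, THEN conjunct2, THEN conjunct2, THEN conjunct2, THEN conjunct2, THEN conjunct2, THEN conjunct2, THEN conjunct1] by blast
lemma jacobi: "x \<in> C \<Longrightarrow> y \<in> C \<Longrightarrow> z \<in> C \<Longrightarrow>
   br (br x y) z \<boxplus> (br (br y z) x \<boxplus> br (br z x) y) = z0"
  using ax[THEN conjunct2, THEN conjunct2, THEN conjunct2, THEN conjunct2, THEN conjunct2, THEN conjunct2, THEN conjunct2, THEN conjunct2, THEN conjunct2, THEN conjunct2, THEN conjunct2, THEN conjunct2, THEN conjunct2, THEN conjunct2, THEN conjunct2, THEN conjunct2] by blast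

lemma add_cancel_l:
  assumes "x \<in> C" "y \<in> C" "z \<in> C" "x \<boxplus> y = x \<boxplus> z" shows "y = z"
proof -
  obtain w where w: "w \<in> C" "x \<boxplus> w = z0" using ex_inv assms(1) by blast
  have "y = (w \<boxplus> x) \<boxplus> y" using w assms by (simp add: add_comm)
  also have "\<dots> = w \<boxplus> (x \<boxplus> z)" using w assms by (simp add: add_assoc)
  also have "\<dots> = z" using w assms by (simp add: add_assoc[symmetric] add_comm)
  finally show ?thesis .
qed

lemma zero_sm[simp]: "x \<in> C \<Longrightarrow> 0 \<star> x = z0"
  using add_sm[of x 0 0] add_cancel_l[of "0 \<star> x" "0 \<star> x" z0] by simp

lemma sm_zero[simp]: "c \<star> z0 = z0"
  using sm_add[of z0 z0 c] add_cancel_l[of "c \<star> z0" "c \<star> z0" z0] by simp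

lemma neg_add[simp]: "x \<in> C \<Longrightarrow> (-1) \<star> x \<boxplus> x = z0"
  using add_sm[of x "-1" 1] by simp

lemma add_neg[simp]: "x \<in> C \<Longrightarrow> x \<boxplus> (-1) \<star> x = z0"
  using neg_add add_comm by simp

lemma neg_cancel:
  assumes "p \<in> C" "a \<in> C" "p \<boxplus> (-1) \<star> a = z0" shows "p = a"
proof -
  have "p = p \<boxplus> ((-1) \<star> a \<boxplus> a)" using assms by simp
  also have "\<dots> = (p \<boxplus> (-1) \<star> a) \<boxplus> a" by (rule add_assoc[symmetric]) (use assms in auto)
  also have "\<dots> = a" using assms by simp
  finally show ?thesis .
qed

lemma sum_zero_neg:
  assumes "p \<in> C" "a \<in> C" "p \<boxplus> a = z0" shows "p = (-1) \<star> a"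
  using neg_cancel[of p "(-1) \<star> a"] assms by simp

lemma br_zero_l[simp]: "y \<in> C \<Longrightarrow> br z0 y = z0"
  using br_sm_l[of z0 y 0] by simp
lemma br_zero_r[simp]: "x \<in> C \<Longrightarrow> br x z0 = z0"
  using br_sm_r[of x z0 0] by simp

lemma antisym: assumes "x \<in> C" "y \<in> C" shows "br y x = (-1) \<star> br x y"
proof -
  have "br (x \<boxplus> y) (x \<boxplus> y) = br x (x \<boxplus> y) \<boxplus> br y (x \<boxplus> y)" by (rule br_add_l) (use assms in auto)
  also have "\<dots> = (br x x \<boxplus> br x y) \<boxplus> (br y x \<boxplus> br y y)" using assms by (simp only: br_add_r)
  also have "\<dots> = br x y \<boxplus> br y x" using assms by simp
  finally have e: "br (x \<boxplus> y) (x \<boxplus> y) = br x y \<boxplus> br y x" .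
  have "br (x \<boxplus> y) (x \<boxplus> y) = z0" using assms by simp
  then have "br x y \<boxplus> br y x = z0" using e by simp
  then have "br y x \<boxplus> br x y = z0" using assms add_comm[of "br y x" "br x y"] by simp
  then show ?thesis using sum_zero_neg[of "br y x" "br x y"] assms by simp
qed

lemma deriv: assumes "x \<in> C" "y \<in> C" "t \<in> C"
  shows "br (br x y) t = br (br x t) y \<boxplus> br x (br y t)"
proof -
  have j: "br (br x y) t \<boxplus> (br (br y t) x \<boxplus> br (br t x) y) = z0" using jacobi assms by blast
  have 1: "br (br y t) x = (-1) \<star> br x (br y t)" using antisym[of x "br y t"] assms by simp
  have 2: "br (br t x) y = (-1) \<star> br (br x t) y" using antisym[of x t] assms by (simp add: br_sm_l)
  have k: "br (br x y) t \<boxplus> (-1) \<star> (br (br x t) y \<boxplus> br x (br y t)) = z0"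
    using j 1 2 assms by (simp add: sm_add add_comm)
  show ?thesis using neg_cancel[OF _ _ k] assms by simp
qed

lemma neg_self_zero:
  assumes "(1::'k) + 1 \<noteq> 0" "x \<in> C" "x = (-1) \<star> x" shows "x = z0"
proof -
  have "x \<boxplus> x = x \<boxplus> (-1) \<star> x" by (rule arg_cong[where f = "\<lambda>y. x \<boxplus> y"], rule assms(3))
  also have "\<dots> = z0" using assms(2) by simp
  finally have xx: "x \<boxplus> x = z0" .
  have "(1 + 1) \<star> x = 1 \<star> x \<boxplus> 1 \<star> x" by (rule add_sm) (rule assms(2))
  also have "\<dots> = z0" using xx assms(2) by simp
  finally have "(1 + 1) \<star> x = z0" .
  then have "inverse (1+1) \<star> ((1 + 1) \<star> x) = z0" by simp
  then show ?thesis using assms(1,2) by simp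
qed

definition M :: "'b monoid" where "M = \<lparr>carrier = C, mult = ladd L, one = z0\<rparr>"

lemma CM: "comm_monoid M"
  unfolding M_def
  by (rule comm_monoidI) (auto simp: add_assoc add_comm add_lcomm)

definition lsum :: "('c \<Rightarrow> 'b) \<Rightarrow> 'c set \<Rightarrow> 'b" where "lsum f A = finprod M f A"

lemma lsum_empty[simp]: "lsum f {} = z0"
  unfolding lsum_def using comm_monoid.finprod_empty[OF CM] by (simp add: M_def)

lemma lsum_infinite: "infinite A \<Longrightarrow> lsum f A = z0"
  unfolding lsum_def using comm_monoid.finprod_infinite[OF CM] by (simp add: M_def)

lemma lsum_insert: "finite A \<Longrightarrow> a \<notin> A \<Longrightarrow> (\<And>x. x \<in> insert a A \<Longrightarrow> f x \<in> C) \<Longrightarrow>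
   lsum f (insert a A) = f a \<boxplus> lsum f A"
  unfolding lsum_def using comm_monoid.finprod_insert[OF CM, of A a f] by (auto simp: M_def Pi_def)

lemma lsum_closed[simp]: "(\<And>x. x \<in> A \<Longrightarrow> f x \<in> C) \<Longrightarrow> lsum f A \<in> C"
  unfolding lsum_def using comm_monoid.finprod_closed[OF CM, of f A] by (auto simp: M_def Pi_def)

lemma lsum_zero: "(\<And>x. x \<in> A \<Longrightarrow> f x = z0) \<Longrightarrow> lsum f A = z0"
  unfolding lsum_def using comm_monoid.finprod_one_eqI[OF CM, of A f] by (auto simp: M_def)

lemma lsum_add: "(\<And>x. x \<in> A \<Longrightarrow> f x \<in> C) \<Longrightarrow> (\<And>x. x \<in> A \<Longrightarrow> g x \<in> C) \<Longrightarrow>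
   lsum (\<lambda>x. f x \<boxplus> g x) A = lsum f A \<boxplus> lsum g A"
  unfolding lsum_def using comm_monoid.finprod_multf[OF CM, of f A g] by (auto simp: M_def Pi_def)

lemma lsum_cong: "A = B \<Longrightarrow> (\<And>x. x \<in> B \<Longrightarrow> g x \<in> C) \<Longrightarrow> (\<And>x. x \<in> B \<Longrightarrow> f x = g x) \<Longrightarrow>
   lsum f A = lsum g B"
  unfolding lsum_def using comm_monoid.finprod_cong'[OF CM, of A B g f] by (auto simp: M_def Pi_def)

lemma lsum_neutral: "finite B \<Longrightarrow> A \<subseteq> B \<Longrightarrow> (\<And>x. x \<in> B - A \<Longrightarrow> f x = z0) \<Longrightarrow>
   (\<And>x. x \<in> B \<Longrightarrow> f x \<in> C) \<Longrightarrow> lsum f A = lsum f B"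
  unfolding lsum_def using comm_monoid.finprod_mono_neutral_cong_left[OF CM, of B A f f]
  by (auto simp: M_def Pi_def)

lemma lsum_single: "finite A \<Longrightarrow> i \<in> A \<Longrightarrow> (\<And>x. x \<in> A \<Longrightarrow> x \<noteq> i \<Longrightarrow> f x = z0) \<Longrightarrow>
   f i \<in> C \<Longrightarrow> lsum f A = f i"
proof -
  assume a: "finite A" "i \<in> A" "\<And>x. x \<in> A \<Longrightarrow> x \<noteq> i \<Longrightarrow> f x = z0" "f i \<in> C"
  have fc: "\<And>x. x \<in> A \<Longrightarrow> f x \<in> C" using a by (metis C_zero)
  have "lsum f A = lsum f {i}"
    by (rule lsum_neutral[symmetric]) (use a fc in auto)
  also have "\<dots> = f i" using lsum_insert[of "{}" i f] a by simp
  finally show ?thesis .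
qed

lemma lsum_sm: "(\<And>x. x \<in> A \<Longrightarrow> f x \<in> C) \<Longrightarrow> c \<star> lsum f A = lsum (\<lambda>x. c \<star> f x) A"
proof (induction A rule: infinite_finite_induct)
  case (infinite A) then show ?case by (simp add: lsum_infinite)
next
  case empty then show ?case by simp
next
  case (insert a A)
  have 1: "lsum f (insert a A) = f a \<boxplus> lsum f A" by (rule lsum_insert) (use insert in auto)
  have 2: "lsum (\<lambda>x. c \<star> f x) (insert a A) = c \<star> f a \<boxplus> lsum (\<lambda>x. c \<star> f x) A"
    by (rule lsum_insert) (use insert in auto)
  show ?case using insert by (simp add: 1 2 sm_add)
qed

lemma lsum_br_l: "(\<And>x. x \<in> A \<Longrightarrow> f x \<in> C) \<Longrightarrow> y \<in> C \<Longrightarrow> br (lsum f A) y = lsum (\<lambda>x. br (f x) y) A"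
proof (induction A rule: infinite_finite_induct)
  case (infinite A) then show ?case by (simp add: lsum_infinite)
next
  case empty then show ?case by simp
next
  case (insert a A)
  have 1: "lsum f (insert a A) = f a \<boxplus> lsum f A" by (rule lsum_insert) (use insert in auto)
  have 2: "lsum (\<lambda>x. br (f x) y) (insert a A) = br (f a) y \<boxplus> lsum (\<lambda>x. br (f x) y) A"
    by (rule lsum_insert) (use insert in auto)
  show ?case using insert by (simp add: 1 2 br_add_l)
qed

lemma lsum_br_r: "(\<And>x. x \<in> A \<Longrightarrow> f x \<in> C) \<Longrightarrow> y \<in> C \<Longrightarrow> br y (lsum f A) = lsum (\<lambda>x. br y (f x)) A"
proof (induction A rule: infinite_finite_induct)
  case (infinite A) then show ?case by (simp add: lsum_infinite)
next
  case empty then show ?case by simp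
next
  case (insert a A)
  have 1: "lsum f (insert a A) = f a \<boxplus> lsum f A" by (rule lsum_insert) (use insert in auto)
  have 2: "lsum (\<lambda>x. br y (f x)) (insert a A) = br y (f a) \<boxplus> lsum (\<lambda>x. br y (f x)) A"
    by (rule lsum_insert) (use insert in auto)
  show ?case using insert by (simp add: 1 2 br_add_r)
qed

end



lemma mon_split: "c \<le> lookup mo i \<Longrightarrow> (mo - single i c) + single i c = (mo :: nat \<Rightarrow>\<^sub>0 nat)"
  by (rule poly_mapping_eqI) (auto simp: lookup_add lookup_minus lookup_single when_def)

lemma single_12: "(mo + single i (1::nat)) + single i 1 = mo + single i 2"
  by (simp add: add.assoc single_add[symmetric] numeral_2_eq_2)

definition sz :: "nat \<Rightarrow> (nat \<Rightarrow>\<^sub>0 nat) \<Rightarrow> nat" where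
  "sz n mo = (\<Sum>j\<in>{1..n}. lookup mo j)"

lemma sz_add: "i \<in> {1..n} \<Longrightarrow> sz n (mo + single i p) = sz n mo + p"
proof -
  assume i: "i \<in> {1..n}"
  have "sz n (mo + single i p) = (\<Sum>j\<in>{1..n}. lookup mo j) + (\<Sum>j\<in>{1..n}. lookup (single i p) j)"
    unfolding sz_def by (simp add: lookup_add sum.distrib)
  also have "(\<Sum>j\<in>{1..n}. lookup (single i p) j) = (\<Sum>j\<in>{1..n}. if j = i then p else 0)"
    by (rule sum.cong) (auto simp: lookup_single when_def)
  also have "\<dots> = p" using i by simp
  finally show ?thesis by (simp add: sz_def)
qed

lemma sz_zero: "sz n mo = 0 \<Longrightarrow> j \<in> {1..n} \<Longrightarrow> lookup mo j = 0"
  unfolding sz_def by simp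

lemma sz_pos: assumes "0 < sz n mo" shows "\<exists>i\<in>{1..n}. 0 < lookup mo i"
proof (rule ccontr)
  assume "\<not> ?thesis"
  then have "\<forall>i\<in>{1..n}. lookup mo i = 0" by auto
  then have "sz n mo = 0" unfolding sz_def by simp
  with assms show False by simp
qed

locale pres = lie L for L :: "('k::field, 'b) lie_alg" +
  fixes m n :: nat and h :: "gen \<Rightarrow> 'b"
  assumes hg: "h ` gens m n \<subseteq> lcar L"
  and hr: "\<forall>(p, q)\<in>rels m n. leval L h p = leval L h q"
  and two: "(1::'k) + 1 \<noteq> 0"
begin

abbreviation hA where "hA k \<equiv> h (GA k)"
abbreviation hT where "hT k \<equiv> h (GT k)"
abbreviation hU where "hU k \<equiv> h (GU k)"

lemma hA_C[simp]: "k \<in> {1..m} \<Longrightarrow> hA k \<in> C" using hg by (auto simp: gens_def)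
lemma hT_C[simp]: "k \<in> {1..n} \<Longrightarrow> hT k \<in> C" using hg by (auto simp: gens_def)
lemma hU_C[simp]: "k \<in> {1..n} \<Longrightarrow> hU k \<in> C" using hg by (auto simp: gens_def)

lemma rel: "(p, q) \<in> rels m n \<Longrightarrow> leval L h p = leval L h q"
  using hr by blast

lemma rTT: "i \<in> {1..n} \<Longrightarrow> j \<in> {1..n} \<Longrightarrow> br (hT i) (hT j) = z0"
  using rel[of "LBr (LGen (GT i)) (LGen (GT j))" LZero] unfolding rels_def by auto
lemma rTU: "i \<in> {1..n} \<Longrightarrow> j \<in> {1..n} \<Longrightarrow> br (hT i) (hU j) = z0"
  using rel[of "LBr (LGen (GT i)) (LGen (GU j))" LZero] unfolding rels_def by auto
lemma rUU: "i \<in> {1..n} \<Longrightarrow> j \<in> {1..n} \<Longrightarrow> br (hU i) (hU j) = z0"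
  using rel[of "LBr (LGen (GU i)) (LGen (GU j))" LZero] unfolding rels_def by auto
lemma rUT: "i \<in> {1..n} \<Longrightarrow> j \<in> {1..n} \<Longrightarrow> br (hU i) (hT j) = z0"
  using antisym[of "hT j" "hU i"] rTU[of j i] by simp
lemma rAU: "k \<in> {1..m} \<Longrightarrow> l \<in> {1..n} \<Longrightarrow> br (hA k) (hU l) = br (br (hA k) (hT l)) (hT l)"
  using rel[of "LBr (LGen (GA k)) (LGen (GU l))" "LBr (LBr (LGen (GA k)) (LGen (GT l))) (LGen (GT l))"]
  unfolding rels_def by auto
lemma rsq: "k \<in> {1..m} \<Longrightarrow> l \<in> {1..m} \<Longrightarrow> sorted_wrt (<) js \<Longrightarrow> set js \<subseteq> {1..n} \<Longrightarrow>
   br (foldl (\<lambda>x j. br x (hT j)) (hA k) js) (hA l) = z0"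
proof -
  assume a: "k \<in> {1..m}" "l \<in> {1..m}" "sorted_wrt (<) js" "set js \<subseteq> {1..n}"
  have "(LBr (lnormed (LGen (GA k)) (map (\<lambda>j. LGen (GT j)) js)) (LGen (GA l)), LZero) \<in> rels m n"
    using a unfolding rels_def by blast
  from rel[OF this] show ?thesis by (simp add: leval_lnormed foldl_map)
qed

definition D where "D i x = br x (hT i)"
definition Ub where "Ub i x = br x (hU i)"

lemma D_C[simp]: "x \<in> C \<Longrightarrow> i \<in> {1..n} \<Longrightarrow> D i x \<in> C" by (simp add: D_def)
lemma Dpow_C[simp]: "x \<in> C \<Longrightarrow> i \<in> {1..n} \<Longrightarrow> (D i ^^ k) x \<in> C" by (induction k) auto

lemma D_comm: "x \<in> C \<Longrightarrow> i \<in> {1..n} \<Longrightarrow> j \<in> {1..n} \<Longrightarrow> D i (D j x) = D j (D i x)"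
  unfolding D_def using deriv[of x "hT j" "hT i"] rTT[of j i] by simp

lemma D_Dpow: "x \<in> C \<Longrightarrow> i \<in> {1..n} \<Longrightarrow> j \<in> {1..n} \<Longrightarrow> D i ((D j ^^ k) x) = (D j ^^ k) (D i x)"
proof (induction k)
  case (Suc k) then show ?case using D_comm[of "(D j ^^ k) x" i j] by simp
qed simp

lemma Dpow_Dpow: "x \<in> C \<Longrightarrow> i \<in> {1..n} \<Longrightarrow> j \<in> {1..n} \<Longrightarrow> (D i ^^ p) ((D j ^^ k) x) = (D j ^^ k) ((D i ^^ p) x)"
  by (induction p) (auto simp: D_Dpow)

lemma Ub_D: "x \<in> C \<Longrightarrow> i \<in> {1..n} \<Longrightarrow> j \<in> {1..n} \<Longrightarrow> Ub i (D j x) = D j (Ub i x)"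
  unfolding D_def Ub_def using deriv[of x "hT j" "hU i"] rTU[of j i] by simp

lemma Ub_Dpow: "x \<in> C \<Longrightarrow> i \<in> {1..n} \<Longrightarrow> j \<in> {1..n} \<Longrightarrow> Ub i ((D j ^^ k) x) = (D j ^^ k) (Ub i x)"
proof (induction k)
  case (Suc k) then show ?case using Ub_D[of "(D j ^^ k) x" i j] by simp
qed simp

lemma Ub_C[simp]: "x \<in> C \<Longrightarrow> i \<in> {1..n} \<Longrightarrow> Ub i x \<in> C" by (simp add: Ub_def)

definition Fo :: "nat list \<Rightarrow> (nat \<Rightarrow>\<^sub>0 nat) \<Rightarrow> 'b \<Rightarrow> 'b" where
  "Fo js mo x = foldl (\<lambda>x j. (D j ^^ lookup mo j) x) x js"

lemma Fo_Nil[simp]: "Fo [] mo x = x" by (simp add: Fo_def)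
lemma Fo_Cons[simp]: "Fo (j # js) mo x = Fo js mo ((D j ^^ lookup mo j) x)" by (simp add: Fo_def)

lemma Fo_C[simp]: "set js \<subseteq> {1..n} \<Longrightarrow> x \<in> C \<Longrightarrow> Fo js mo x \<in> C"
  by (induction js arbitrary: x) auto

lemma D_Fo: "set js \<subseteq> {1..n} \<Longrightarrow> x \<in> C \<Longrightarrow> i \<in> {1..n} \<Longrightarrow> D i (Fo js mo x) = Fo js mo (D i x)"
  by (induction js arbitrary: x) (auto simp: D_Dpow)

lemma Ub_Fo: "set js \<subseteq> {1..n} \<Longrightarrow> x \<in> C \<Longrightarrow> i \<in> {1..n} \<Longrightarrow> Ub i (Fo js mo x) = Fo js mo (Ub i x)"
  by (induction js arbitrary: x) (auto simp: Ub_Dpow)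

lemma Fo_cong: "(\<And>j. j \<in> set js \<Longrightarrow> lookup mo j = lookup mo' j) \<Longrightarrow> Fo js mo x = Fo js mo' x"
  by (induction js arbitrary: x) auto

lemma Fo_add: "set js \<subseteq> {1..n} \<Longrightarrow> distinct js \<Longrightarrow> i \<in> set js \<Longrightarrow> x \<in> C \<Longrightarrow>
   Fo js (mo + single i p) x = Fo js mo ((D i ^^ p) x)"
proof (induction js arbitrary: x)
  case Nil then show ?case by simp
next
  case (Cons j js)
  show ?case
  proof (cases "j = i")
    case True
    have "lookup (mo + single i p) i = lookup mo i + p" by (simp add: lookup_add)
    then have "Fo (j # js) (mo + single i p) x = Fo js (mo + single i p) ((D i ^^ lookup mo i) ((D i ^^ p) x))"
      using True by (simp add: funpow_add)
    also have "\<dots> = Fo js mo ((D i ^^ lookup mo i) ((D i ^^ p) x))"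
      by (rule Fo_cong) (use Cons True in \<open>auto simp: lookup_add lookup_single when_def\<close>)
    finally show ?thesis using True by simp
  next
    case False
    have i: "i \<in> {1..n}" and j: "j \<in> {1..n}" using Cons by auto
    have "lookup (mo + single i p) j = lookup mo j" using False by (simp add: lookup_add lookup_single)
    then have "Fo (j # js) (mo + single i p) x = Fo js (mo + single i p) ((D j ^^ lookup mo j) x)" by simp
    also have "\<dots> = Fo js mo ((D i ^^ p) ((D j ^^ lookup mo j) x))"
      using Cons False by auto
    also have "\<dots> = Fo (j # js) mo ((D i ^^ p) x)"
      using Dpow_Dpow[of x i j p] Cons i j by simp
    finally show ?thesis .
  qed
qed

lemma Fo_sq: "(\<And>j. j \<in> set js \<Longrightarrow> lookup mo j \<le> 1) \<Longrightarrow>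
   Fo js mo x = foldl (\<lambda>x j. D j x) x (filter (\<lambda>j. lookup mo j \<noteq> 0) js)"
proof (induction js arbitrary: x)
  case Nil then show ?case by simp
next
  case (Cons j js)
  have "lookup mo j = 0 \<or> lookup mo j = 1" using Cons.prems by fastforce
  then show ?case using Cons by auto
qed

definition E :: "nat \<Rightarrow> (nat \<Rightarrow>\<^sub>0 nat) \<Rightarrow> 'b" where
  "E k mo = Fo [1..<Suc n] mo (hA k)"

lemma E_C[simp]: "k \<in> {1..m} \<Longrightarrow> E k mo \<in> C"
  unfolding E_def by (rule Fo_C) auto

lemma E_T: "k \<in> {1..m} \<Longrightarrow> i \<in> {1..n} \<Longrightarrow> br (E k mo) (hT i) = E k (mo + single i 1)"
proof -
  assume k: "k \<in> {1..m}" and i: "i \<in> {1..n}"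
  have "br (E k mo) (hT i) = D i (E k mo)" by (simp add: D_def)
  also have "\<dots> = Fo [1..<Suc n] mo (D i (hA k))" unfolding E_def by (rule D_Fo) (use k i in auto)
  also have "\<dots> = E k (mo + single i 1)" unfolding E_def by (subst Fo_add) (use k i in auto)
  finally show ?thesis .
qed

lemma E_U: "k \<in> {1..m} \<Longrightarrow> i \<in> {1..n} \<Longrightarrow> br (E k mo) (hU i) = E k (mo + single i 2)"
proof -
  assume k: "k \<in> {1..m}" and i: "i \<in> {1..n}"
  have "br (E k mo) (hU i) = Ub i (E k mo)" by (simp add: Ub_def)
  also have "\<dots> = Fo [1..<Suc n] mo (Ub i (hA k))" unfolding E_def by (rule Ub_Fo) (use k i in auto)
  also have "Ub i (hA k) = (D i ^^ 2) (hA k)" using rAU[OF k i] by (simp add: Ub_def D_def numeral_2_eq_2)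
  also have "Fo [1..<Suc n] mo ((D i ^^ 2) (hA k)) = E k (mo + single i 2)" unfolding E_def by (subst Fo_add) (use k i in auto)
  finally show ?thesis .
qed

lemma E_cong: "(\<And>j. j \<in> {1..n} \<Longrightarrow> lookup mo j = lookup mo' j) \<Longrightarrow> E k mo = E k mo'"
  unfolding E_def by (rule Fo_cong) auto

lemma E_zero: "E k 0 = hA k"
proof -
  have "Fo js 0 x = x" for js x by (induction js arbitrary: x) auto
  then show ?thesis by (simp add: E_def)
qed

lemma neg_swap: "x \<in> C \<Longrightarrow> y \<in> C \<Longrightarrow> x = (-1) \<star> y \<Longrightarrow> y = (-1) \<star> x"
  by simp

lemma neg_zero: assumes "x \<in> C" "(-1) \<star> x = z0" shows "x = z0"
proof -
  have "x = (-1) \<star> ((-1) \<star> x)" using assms(1) by simp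
  also have "\<dots> = z0" unfolding assms(2) by simp
  finally show ?thesis .
qed

abbreviation cc where "cc k l a b \<equiv> br (E k a) (E l b)"

lemma cc_C: "k \<in> {1..m} \<Longrightarrow> l \<in> {1..m} \<Longrightarrow> cc k l a b \<in> C" by simp

lemma key: "k \<in> {1..m} \<Longrightarrow> l \<in> {1..m} \<Longrightarrow> br (E k a) (E l b) = z0"
proof -
  have "\<forall>a b k l. sz n a + sz n b = N \<longrightarrow> k \<in> {1..m} \<longrightarrow> l \<in> {1..m} \<longrightarrow> cc k l a b = z0" for N
  proof (induction N rule: less_induct)
    case (less N)
    have R1: "cc k l (a + single i 1) b = (-1) \<star> cc k l a (b + single i 1)"
      if "sz n a + sz n b + 1 = N" "k \<in> {1..m}" "l \<in> {1..m}" "i \<in> {1..n}" for a b k l i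
    proof -
      have lt: "sz n a + sz n b < N" using that by simp
      have "cc k l a b = z0" using less.IH[OF lt] that by blast
      then have "D i (cc k l a b) = z0" using br_zero_l[OF hT_C[OF that(4)]] by (simp add: D_def)
      moreover have "D i (cc k l a b) = cc k l (a + single i 1) b \<boxplus> cc k l a (b + single i 1)"
        unfolding D_def using deriv[of "E k a" "E l b" "hT i"] that by (simp add: E_T)
      ultimately have "cc k l (a + single i 1) b \<boxplus> cc k l a (b + single i 1) = z0" by simp
      from sum_zero_neg[OF _ _ this] show ?thesis using that by simp
    qed
    have R2: "cc k l (a + single i 2) b = (-1) \<star> cc k l a (b + single i 2)"
      if "sz n a + sz n b + 2 = N" "k \<in> {1..m}" "l \<in> {1..m}" "i \<in> {1..n}" for a b k l i
    proof -
      have lt: "sz n a + sz n b < N" using that by simp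
      have "cc k l a b = z0" using less.IH[OF lt] that by blast
      then have "Ub i (cc k l a b) = z0" using br_zero_l[OF hU_C[OF that(4)]] by (simp add: Ub_def)
      moreover have "Ub i (cc k l a b) = cc k l (a + single i 2) b \<boxplus> cc k l a (b + single i 2)"
        unfolding Ub_def using deriv[of "E k a" "E l b" "hU i"] that by (simp add: E_U)
      ultimately have "cc k l (a + single i 2) b \<boxplus> cc k l a (b + single i 2) = z0" by simp
      from sum_zero_neg[OF _ _ this] show ?thesis using that by simp
    qed
    have C1: "cc k l a b = z0"
      if "sz n a + sz n b = N" "k \<in> {1..m}" "l \<in> {1..m}" "i \<in> {1..n}" "2 \<le> lookup b i" for a b k l i
    proof -
      define b2 where "b2 = b - single i 2"
      have bb: "b = b2 + single i 2" unfolding b2_def using mon_split[of 2 b i] that by simp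
      have szb: "sz n b = sz n b2 + 2" using bb sz_add that by simp
      have bb': "(b2 + single i 1) + single i 1 = b" using bb single_12 by simp
      have "cc k l (a + single i 1) (b2 + single i 1) = (-1) \<star> cc k l a ((b2 + single i 1) + single i 1)"
        by (rule R1) (use that szb sz_add in auto)
      then have r1: "cc k l (a + single i 1) (b2 + single i 1) = (-1) \<star> cc k l a b"
        unfolding bb' .
      have s1: "cc k l a b = (-1) \<star> cc k l (a + single i 1) (b2 + single i 1)"
        by (rule neg_swap[OF _ _ r1]) (use that in simp_all)
      have "cc k l ((a + single i 1) + single i 1) b2 = (-1) \<star> cc k l (a + single i 1) (b2 + single i 1)"
        by (rule R1) (use that szb sz_add in auto)
      then have r2: "cc k l (a + single i 2) b2 = (-1) \<star> cc k l (a + single i 1) (b2 + single i 1)"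
        unfolding single_12 .
      have s2: "cc k l (a + single i 1) (b2 + single i 1) = (-1) \<star> cc k l (a + single i 2) b2"
        by (rule neg_swap[OF _ _ r2]) (use that in simp_all)
      have s3: "cc k l (a + single i 2) b2 = (-1) \<star> cc k l a (b2 + single i 2)"
        by (rule R2) (use that szb in auto)
      have "cc k l a b = (-1) \<star> ((-1) \<star> cc k l (a + single i 2) b2)"
        unfolding s1 s2 ..
      also have "\<dots> = cc k l (a + single i 2) b2" using that by simp
      also have "\<dots> = (-1) \<star> cc k l a (b2 + single i 2)" by (rule s3)
      also have "\<dots> = (-1) \<star> cc k l a b" using bb by simp
      finally have "cc k l a b = (-1) \<star> cc k l a b" .
      from neg_self_zero[OF two _ this] show ?thesis using that by simp
    qed
    have C1': "cc k l a b = z0"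
      if "sz n a + sz n b = N" "k \<in> {1..m}" "l \<in> {1..m}" "i \<in> {1..n}" "2 \<le> lookup a i" for a b k l i
    proof -
      have "cc l k b a = z0" by (rule C1) (use that in auto)
      then show ?thesis using antisym[of "E l b" "E k a"] that by simp
    qed
    have C1'': "cc k l a b = z0"
      if "sz n a + sz n b = N" "k \<in> {1..m}" "l \<in> {1..m}" "i \<in> {1..n}" "2 \<le> lookup a i + lookup b i" for a b k l i
    proof (cases "2 \<le> lookup a i \<or> 2 \<le> lookup b i")
      case True then show ?thesis using C1 C1' that by blast
    next
      case False
      then have a1: "1 \<le> lookup a i" and b1: "1 \<le> lookup b i" using that by auto
      define b1' where "b1' = b - single i 1"
      have bb: "b = b1' + single i 1" unfolding b1'_def using mon_split[of 1 b i] b1 by simp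
      have szb: "sz n b = sz n b1' + 1" using bb sz_add that by simp
      have r: "cc k l (a + single i 1) b1' = (-1) \<star> cc k l a (b1' + single i 1)"
        by (rule R1) (use that szb in auto)
      have zf: "cc k l (a + single i 1) b1' = z0"
        by (rule C1'[of "a + single i 1" b1' k l i]) (use that szb sz_add a1 in \<open>auto simp: lookup_add\<close>)
      have "(-1) \<star> cc k l a (b1' + single i 1) = z0" using zf unfolding r .
      then have "(-1) \<star> cc k l a b = z0" using bb by simp
      then show ?thesis by (rule neg_zero[rotated]) (use that in simp)
    qed
    have C2: "\<forall>a b k l. sz n b = M \<longrightarrow> sz n a + sz n b = N \<longrightarrow> (\<forall>i\<in>{1..n}. lookup a i + lookup b i \<le> 1)
       \<longrightarrow> k \<in> {1..m} \<longrightarrow> l \<in> {1..m} \<longrightarrow> cc k l a b = z0" for M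
    proof (induction M)
      case 0
      show ?case
      proof (intro allI impI)
        fix a b k l
        assume h: "sz n b = 0" "sz n a + sz n b = N" "\<forall>i\<in>{1..n}. lookup a i + lookup b i \<le> 1"
          "k \<in> {1..m}" "l \<in> {1..m}"
        have "E l b = E l 0" by (rule E_cong) (use h sz_zero in auto)
        then have Eb: "E l b = hA l" by (simp add: E_zero)
        have "E k a = foldl (\<lambda>x j. D j x) (hA k) (filter (\<lambda>j. lookup a j \<noteq> 0) [1..<Suc n])"
          unfolding E_def by (rule Fo_sq) (use h in force)
        then have Ea: "E k a = foldl (\<lambda>x j. br x (hT j)) (hA k) (filter (\<lambda>j. lookup a j \<noteq> 0) [1..<Suc n])"
          by (simp add: D_def[abs_def])
        have so: "sorted_wrt (<) (filter (\<lambda>j. lookup a j \<noteq> 0) [1..<Suc n])"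
          by (rule sorted_wrt_filter) (rule sorted_wrt_upt)
        show "cc k l a b = z0" unfolding Ea Eb
          by (rule rsq[OF h(4) h(5) so]) auto
      qed
    next
      case (Suc M)
      show ?case
      proof (intro allI impI)
        fix a b k l
        assume h: "sz n b = Suc M" "sz n a + sz n b = N" "\<forall>i\<in>{1..n}. lookup a i + lookup b i \<le> 1"
          "k \<in> {1..m}" "l \<in> {1..m}"
        obtain i where i: "i \<in> {1..n}" "0 < lookup b i" using sz_pos[of n b] h by auto
        define b1' where "b1' = b - single i 1"
        have bb: "b = b1' + single i 1" unfolding b1'_def using mon_split[of 1 b i] i by simp
        have szb: "sz n b = sz n b1' + 1" using bb sz_add i by simp
        have r: "cc k l (a + single i 1) b1' = (-1) \<star> cc k l a (b1' + single i 1)"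
          by (rule R1) (use h i szb in auto)
        have sq: "\<forall>j\<in>{1..n}. lookup (a + single i 1) j + lookup b1' j \<le> 1"
        proof
          fix j assume "j \<in> {1..n}"
          then have "lookup a j + lookup b j \<le> 1" using h by blast
          moreover have "lookup b j = lookup b1' j + lookup (single i 1) j" using bb by (metis lookup_add)
          ultimately show "lookup (a + single i 1) j + lookup b1' j \<le> 1" by (simp add: lookup_add)
        qed
        have zf: "cc k l (a + single i 1) b1' = z0"
          using Suc.IH sq h szb sz_add i by auto
        have "(-1) \<star> cc k l a (b1' + single i 1) = z0" using zf unfolding r .
        then have "(-1) \<star> cc k l a b = z0" using bb by simp
        then show "cc k l a b = z0" by (rule neg_zero[rotated]) (use h in simp)
      qed
    qed
    show ?case
    proof (intro allI impI)
      fix a b k l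
      assume h: "sz n a + sz n b = N" "k \<in> {1..m}" "l \<in> {1..m}"
      show "cc k l a b = z0"
      proof (cases "\<exists>i\<in>{1..n}. 2 \<le> lookup a i + lookup b i")
        case True then show ?thesis using C1'' h by blast
      next
        case False
        then have "\<forall>i\<in>{1..n}. lookup a i + lookup b i \<le> 1" by auto
        then show ?thesis using C2 h by blast
      qed
    qed
  qed
  then show "k \<in> {1..m} \<Longrightarrow> l \<in> {1..m} \<Longrightarrow> br (E k a) (E l b) = z0" by blast
qed

end



lemma single_inj1: assumes "single j (1::nat) = single i 1" shows "j = i"
proof -
  have "lookup (single j (1::nat)) j = lookup (single i 1) j" using assms by simp
  then show "j = i" by (simp add: lookup_single when_def split: if_splits)
qed

lemma single_ne21: "single j (2::nat) \<noteq> single i 1"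
proof
  assume "single j (2::nat) = single i 1"
  then have "lookup (single j (2::nat)) j = lookup (single i 1) j" by simp
  then show False by (simp add: lookup_single when_def split: if_splits)
qed

lemma pconst_pvar: "pconst c * pvar i = (single (single i 1) c :: 'k::field mpoly)"
  by (simp add: pconst_def pvar_def mult_single)
lemma pconst_pvar2: "pconst c * pvar i ^ 2 = (single (single i 2) c :: 'k::field mpoly)"
  by (simp add: pconst_def pvar_sq mult_single)

lemma single_eq1: "(single j (1::nat) = single i 1) = (j = i)"
proof
  assume "single j (1::nat) = single i 1"
  then show "j = i" by (rule single_inj1)
qed simp
lemma single_eq2: "(single j (2::nat) = single i 2) = (j = i)"
proof
  assume "single j (2::nat) = single i 2"
  then have "lookup (single j (2::nat)) j = lookup (single i 2) j" by simp
  then show "j = i" by (simp add: lookup_single when_def split: if_splits)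
qed simp
lemma single_ne12: "single j (1::nat) \<noteq> single i 2"
proof
  assume "single j (1::nat) = single i 2"
  then have "lookup (single j (1::nat)) i = lookup (single i 2) i" by simp
  then show False by (simp add: lookup_single when_def split: if_splits)
qed

lemma lookup_tp1: "i \<in> {1..n} \<Longrightarrow> lookup (tp n c d) (single i 1) = c i"
proof -
  assume i: "i \<in> {1..n}"
  have "lookup (tp n c d) (single i 1) = (\<Sum>j\<in>{1..n}. if j = i then c j else 0)"
    unfolding tp_def lookup_sum
  proof (rule sum.cong)
    fix j
    show "lookup (pconst (c j) * pvar j + pconst (d j) * pvar j ^ 2) (single i 1) = (if j = i then c j else 0)"
      unfolding lookup_add pconst_pvar pconst_pvar2 lookup_single when_def single_eq1
      using single_ne21[of j i] by simp
  qed simp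
  also have "\<dots> = c i" using i by simp
  finally show ?thesis .
qed

lemma lookup_tp2: "i \<in> {1..n} \<Longrightarrow> lookup (tp n c d) (single i 2) = d i"
proof -
  assume i: "i \<in> {1..n}"
  have "lookup (tp n c d) (single i 2) = (\<Sum>j\<in>{1..n}. if j = i then d j else 0)"
    unfolding tp_def lookup_sum
  proof (rule sum.cong)
    fix j
    show "lookup (pconst (c j) * pvar j + pconst (d j) * pvar j ^ 2) (single i 2) = (if j = i then d j else 0)"
      unfolding lookup_add pconst_pvar pconst_pvar2 lookup_single when_def single_eq2
      using single_ne12[of j i] by simp
  qed simp
  also have "\<dots> = d i" using i by simp
  finally show ?thesis .
qed

context pres
begin

definition Phi :: "nat \<Rightarrow> 'k mpoly \<Rightarrow> 'b" where
  "Phi k p = lsum (\<lambda>mo. lookup p mo \<star> E k mo) (keys p)"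

lemma Phi_C[simp]: "k \<in> {1..m} \<Longrightarrow> Phi k p \<in> C"
  unfolding Phi_def by (rule lsum_closed) simp

lemma Phi_ext: "k \<in> {1..m} \<Longrightarrow> finite S \<Longrightarrow> keys p \<subseteq> S \<Longrightarrow> Phi k p = lsum (\<lambda>mo. lookup p mo \<star> E k mo) S"
  unfolding Phi_def by (rule lsum_neutral) (auto simp: in_keys_iff)

lemma Phi_add: assumes k: "k \<in> {1..m}" shows "Phi k (p + q) = Phi k p \<boxplus> Phi k q"
proof -
  let ?S = "keys p \<union> keys q"
  have "Phi k (p + q) = lsum (\<lambda>mo. lookup (p + q) mo \<star> E k mo) ?S"
    by (rule Phi_ext) (use k keys_add[of p q] in auto)
  also have "\<dots> = lsum (\<lambda>mo. lookup p mo \<star> E k mo \<boxplus> lookup q mo \<star> E k mo) ?S"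
    by (rule lsum_cong) (use k in \<open>auto simp: lookup_add add_sm\<close>)
  also have "\<dots> = lsum (\<lambda>mo. lookup p mo \<star> E k mo) ?S \<boxplus> lsum (\<lambda>mo. lookup q mo \<star> E k mo) ?S"
    by (rule lsum_add) (use k in auto)
  also have "\<dots> = Phi k p \<boxplus> Phi k q"
    using Phi_ext[OF k, of ?S p] Phi_ext[OF k, of ?S q] by simp
  finally show ?thesis .
qed

lemma Phi_zero[simp]: "Phi k 0 = z0"
  by (simp add: Phi_def)

lemma Phi_single: assumes k: "k \<in> {1..m}" shows "Phi k (single mo c) = c \<star> E k mo"
proof -
  have "Phi k (single mo c) = lsum (\<lambda>x. lookup (single mo c) x \<star> E k x) {mo}"
    by (rule Phi_ext) (use k in auto)
  also have "\<dots> = c \<star> E k mo" using lsum_insert[of "{}" mo] k by simp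
  finally show ?thesis .
qed

lemma Phi_pconst: assumes k: "k \<in> {1..m}" shows "Phi k (pconst c * p) = c \<star> Phi k p"
proof -
  have "Phi k (pconst c * p) = lsum (\<lambda>mo. lookup (pconst c * p) mo \<star> E k mo) (keys p)"
    by (rule Phi_ext) (use k keys_pconst_mult in auto)
  also have "\<dots> = lsum (\<lambda>mo. c \<star> (lookup p mo \<star> E k mo)) (keys p)"
    by (rule lsum_cong) (use k in \<open>auto simp: lookup_pconst_mult\<close>)
  also have "\<dots> = c \<star> Phi k p" unfolding Phi_def by (rule lsum_sm[symmetric]) (use k in auto)
  finally show ?thesis .
qed

lemma Phi_T: assumes k: "k \<in> {1..m}" and i: "i \<in> {1..n}"
  shows "Phi k (p * pvar i) = br (Phi k p) (hT i)"
proof (induction p rule: poly_induct)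
  case 1 then show ?case using i by simp
next
  case (2 q mo c)
  have "(single mo c + q) * pvar i = single (mo + single i 1) c + q * pvar i"
    by (simp add: distrib_right pvar_def mult_single)
  then have "Phi k ((single mo c + q) * pvar i) = c \<star> E k (mo + single i 1) \<boxplus> Phi k (q * pvar i)"
    using k by (simp add: Phi_add Phi_single)
  also have "\<dots> = c \<star> br (E k mo) (hT i) \<boxplus> br (Phi k q) (hT i)"
    using 2 k i by (simp add: E_T)
  also have "\<dots> = br (Phi k (single mo c + q)) (hT i)"
    using k i by (simp add: Phi_add Phi_single br_add_l br_sm_l)
  finally show ?case .
qed

lemma Phi_U: assumes k: "k \<in> {1..m}" and i: "i \<in> {1..n}"
  shows "Phi k (p * pvar i ^ 2) = br (Phi k p) (hU i)"
proof (induction p rule: poly_induct)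
  case 1 then show ?case using i by simp
next
  case (2 q mo c)
  have "(single mo c + q) * pvar i ^ 2 = single (mo + single i 2) c + q * pvar i ^ 2"
    by (simp add: distrib_right pvar_sq mult_single)
  then have "Phi k ((single mo c + q) * pvar i ^ 2) = c \<star> E k (mo + single i 2) \<boxplus> Phi k (q * pvar i ^ 2)"
    using k by (simp add: Phi_add Phi_single)
  also have "\<dots> = c \<star> br (E k mo) (hU i) \<boxplus> br (Phi k q) (hU i)"
    using 2 k i by (simp add: E_U)
  also have "\<dots> = br (Phi k (single mo c + q)) (hU i)"
    using k i by (simp add: Phi_add Phi_single br_add_l br_sm_l)
  finally show ?case .
qed

lemma E_Phi: assumes k: "k \<in> {1..m}" and l: "l \<in> {1..m}" shows "br (E k mo) (Phi l q) = z0"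
proof -
  have "br (E k mo) (Phi l q) = lsum (\<lambda>x. br (E k mo) (lookup q x \<star> E l x)) (keys q)"
    unfolding Phi_def by (rule lsum_br_r) (use k l in auto)
  also have "\<dots> = z0" by (rule lsum_zero) (use k l key in \<open>simp add: br_sm_r\<close>)
  finally show ?thesis .
qed

lemma Phi_Phi: assumes k: "k \<in> {1..m}" and l: "l \<in> {1..m}" shows "br (Phi k p) (Phi l q) = z0"
proof -
  have "br (Phi k p) (Phi l q) = lsum (\<lambda>x. br (lookup p x \<star> E k x) (Phi l q)) (keys p)"
    unfolding Phi_def[of k p] by (rule lsum_br_l) (use k l in auto)
  also have "\<dots> = z0" by (rule lsum_zero) (use k l E_Phi in \<open>simp add: br_sm_l\<close>)
  finally show ?thesis .
qed

definition fB :: "(nat \<Rightarrow> 'k mpoly) \<Rightarrow> 'b" where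
  "fB b = lsum (\<lambda>k. Phi k (b k)) {1..m}"

definition fS :: "'k mpoly \<Rightarrow> 'b" where
  "fS s = lsum (\<lambda>i. lookup s (single i 1) \<star> hT i \<boxplus> lookup s (single i 2) \<star> hU i) {1..n}"

lemma fB_C[simp]: "fB b \<in> C" unfolding fB_def by (rule lsum_closed) simp
lemma fS_C[simp]: "fS s \<in> C" unfolding fS_def by (rule lsum_closed) simp

lemma fB_add: "fB (\<lambda>j. b1 j + b2 j) = fB b1 \<boxplus> fB b2"
proof -
  have "fB (\<lambda>j. b1 j + b2 j) = lsum (\<lambda>k. Phi k (b1 k) \<boxplus> Phi k (b2 k)) {1..m}"
    unfolding fB_def by (rule lsum_cong) (auto simp: Phi_add)
  also have "\<dots> = fB b1 \<boxplus> fB b2" unfolding fB_def by (rule lsum_add) auto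
  finally show ?thesis .
qed

lemma fB_pconst: "fB (\<lambda>j. pconst c * b j) = c \<star> fB b"
proof -
  have "fB (\<lambda>j. pconst c * b j) = lsum (\<lambda>k. c \<star> Phi k (b k)) {1..m}"
    unfolding fB_def by (rule lsum_cong) (auto simp: Phi_pconst)
  also have "\<dots> = c \<star> fB b" unfolding fB_def by (rule lsum_sm[symmetric]) auto
  finally show ?thesis .
qed

lemma fB_zero: "fB (\<lambda>_. 0) = z0"
  unfolding fB_def by (rule lsum_zero) simp

lemma fB_sum: "finite I \<Longrightarrow> fB (\<lambda>j. \<Sum>i\<in>I. F i j) = lsum (\<lambda>i. fB (F i)) I"
proof (induction I rule: finite_induct)
  case empty then show ?case using fB_zero by simp
next
  case (insert x I)
  have "fB (\<lambda>j. \<Sum>i\<in>insert x I. F i j) = fB (\<lambda>j. F x j + (\<Sum>i\<in>I. F i j))"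
    using insert by simp
  also have "\<dots> = fB (F x) \<boxplus> fB (\<lambda>j. \<Sum>i\<in>I. F i j)" by (rule fB_add)
  also have "\<dots> = lsum (\<lambda>i. fB (F i)) (insert x I)"
    using insert by (simp add: lsum_insert)
  finally show ?case .
qed

lemma fB_T: "i \<in> {1..n} \<Longrightarrow> fB (\<lambda>j. b j * pvar i) = br (fB b) (hT i)"
proof -
  assume i: "i \<in> {1..n}"
  have "br (fB b) (hT i) = lsum (\<lambda>k. br (Phi k (b k)) (hT i)) {1..m}"
    unfolding fB_def by (rule lsum_br_l) (use i in auto)
  also have "\<dots> = fB (\<lambda>j. b j * pvar i)"
    unfolding fB_def by (rule lsum_cong) (use i in \<open>auto simp: Phi_T\<close>)
  finally show ?thesis by simp
qed

lemma fB_U: "i \<in> {1..n} \<Longrightarrow> fB (\<lambda>j. b j * pvar i ^ 2) = br (fB b) (hU i)"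
proof -
  assume i: "i \<in> {1..n}"
  have "br (fB b) (hU i) = lsum (\<lambda>k. br (Phi k (b k)) (hU i)) {1..m}"
    unfolding fB_def by (rule lsum_br_l) (use i in auto)
  also have "\<dots> = fB (\<lambda>j. b j * pvar i ^ 2)"
    unfolding fB_def by (rule lsum_cong) (use i in \<open>auto simp: Phi_U\<close>)
  finally show ?thesis by simp
qed

lemma fB_fB: "br (fB b1) (fB b2) = z0"
proof -
  have "br (fB b1) (fB b2) = lsum (\<lambda>k. br (Phi k (b1 k)) (fB b2)) {1..m}"
    unfolding fB_def[of b1] by (rule lsum_br_l) auto
  also have "\<dots> = z0"
  proof (rule lsum_zero)
    fix k assume k: "k \<in> {1..m}"
    have "br (Phi k (b1 k)) (fB b2) = lsum (\<lambda>l. br (Phi k (b1 k)) (Phi l (b2 l))) {1..m}"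
      unfolding fB_def by (rule lsum_br_r) (use k in auto)
    also have "\<dots> = z0" by (rule lsum_zero) (use k Phi_Phi in auto)
    finally show "br (Phi k (b1 k)) (fB b2) = z0" .
  qed
  finally show ?thesis .
qed

lemma fS_tp: "fS (tp n c d) = lsum (\<lambda>i. c i \<star> hT i \<boxplus> d i \<star> hU i) {1..n}"
proof (unfold fS_def, rule lsum_cong)
  fix i assume i: "i \<in> {1..n}"
  show "lookup (tp n c d) (single i 1) \<star> hT i \<boxplus> lookup (tp n c d) (single i 2) \<star> hU i = c i \<star> hT i \<boxplus> d i \<star> hU i"
    unfolding lookup_tp1[OF i] lookup_tp2[OF i] ..
qed (auto)

lemma fB_tp: "fB (\<lambda>j. b j * tp n c d) = lsum (\<lambda>i. c i \<star> br (fB b) (hT i) \<boxplus> d i \<star> br (fB b) (hU i)) {1..n}"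
proof -
  have "(\<lambda>j. b j * tp n c d) = (\<lambda>j. \<Sum>i\<in>{1..n}. pconst (c i) * (b j * pvar i) + pconst (d i) * (b j * pvar i ^ 2))"
    unfolding tp_def sum_distrib_left by (simp add: algebra_simps)
  then have "fB (\<lambda>j. b j * tp n c d) = lsum (\<lambda>i. fB (\<lambda>j. pconst (c i) * (b j * pvar i) + pconst (d i) * (b j * pvar i ^ 2))) {1..n}"
    using fB_sum[of "{1..n}" "\<lambda>i j. pconst (c i) * (b j * pvar i) + pconst (d i) * (b j * pvar i ^ 2)"] by simp
  also have "\<dots> = lsum (\<lambda>i. c i \<star> br (fB b) (hT i) \<boxplus> d i \<star> br (fB b) (hU i)) {1..n}"
    by (rule lsum_cong) (auto simp: fB_add fB_pconst fB_T fB_U)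
  finally show ?thesis .
qed

lemma fB_fS: "s \<in> Tplus_car n \<Longrightarrow> br (fB b) (fS s) = fB (\<lambda>j. b j * s)"
proof -
  assume "s \<in> Tplus_car n"
  then obtain c d where s: "s = tp n c d" using Tplus_iff by blast
  have "br (fB b) (fS s) = lsum (\<lambda>i. br (fB b) (c i \<star> hT i \<boxplus> d i \<star> hU i)) {1..n}"
    unfolding s fS_tp by (rule lsum_br_r) auto
  also have "\<dots> = lsum (\<lambda>i. c i \<star> br (fB b) (hT i) \<boxplus> d i \<star> br (fB b) (hU i)) {1..n}"
    by (rule lsum_cong) (auto simp: br_add_r br_sm_r)
  also have "\<dots> = fB (\<lambda>j. b j * s)" unfolding s by (rule fB_tp[symmetric])
  finally show ?thesis .
qed

lemma TU_TU: "i \<in> {1..n} \<Longrightarrow> j \<in> {1..n} \<Longrightarrow> br (a \<star> hT i \<boxplus> b \<star> hU i) (c \<star> hT j \<boxplus> d \<star> hU j) = z0"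
  by (simp add: br_add_l br_add_r br_sm_l br_sm_r rTT rTU rUT rUU)

lemma fS_fS: "br (fS s1) (fS s2) = z0"
proof -
  have "br (fS s1) (fS s2) = lsum (\<lambda>i. br (lookup s1 (single i 1) \<star> hT i \<boxplus> lookup s1 (single i 2) \<star> hU i) (fS s2)) {1..n}"
    unfolding fS_def[of s1] by (rule lsum_br_l) auto
  also have "\<dots> = z0"
  proof (rule lsum_zero)
    fix i assume i: "i \<in> {1..n}"
    show "br (lookup s1 (single i 1) \<star> hT i \<boxplus> lookup s1 (single i 2) \<star> hU i) (fS s2) = z0"
      unfolding fS_def by (subst lsum_br_r) (use i TU_TU in \<open>auto intro: lsum_zero\<close>)
  qed
  finally show ?thesis .
qed

lemma fS_add: "fS (s1 + s2) = fS s1 \<boxplus> fS s2"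
proof -
  have "fS (s1 + s2) = lsum (\<lambda>i. (lookup s1 (single i 1) \<star> hT i \<boxplus> lookup s1 (single i 2) \<star> hU i)
     \<boxplus> (lookup s2 (single i 1) \<star> hT i \<boxplus> lookup s2 (single i 2) \<star> hU i)) {1..n}"
    unfolding fS_def by (rule lsum_cong) (auto simp: lookup_add add_sm add_ac)
  also have "\<dots> = fS s1 \<boxplus> fS s2" unfolding fS_def by (rule lsum_add) auto
  finally show ?thesis .
qed

lemma fS_pconst: "fS (pconst c * s) = c \<star> fS s"
proof -
  have "fS (pconst c * s) = lsum (\<lambda>i. c \<star> (lookup s (single i 1) \<star> hT i \<boxplus> lookup s (single i 2) \<star> hU i)) {1..n}"
    unfolding fS_def by (rule lsum_cong) (auto simp: lookup_pconst_mult sm_add)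
  also have "\<dots> = c \<star> fS s" unfolding fS_def by (rule lsum_sm[symmetric]) auto
  finally show ?thesis .
qed

lemma fS_zero: "fS 0 = z0"
  unfolding fS_def by (rule lsum_zero) simp

definition fW :: "(nat \<Rightarrow> 'k mpoly) \<times> 'k mpoly \<Rightarrow> 'b" where
  "fW x = fB (fst x) \<boxplus> fS (snd x)"

lemma fW_hom: "lie_hom (Wplus m n) L fW"
  unfolding lie_hom_def
proof (intro conjI ballI allI)
  fix x :: "(nat \<Rightarrow> 'k mpoly) \<times> 'k mpoly" assume "x \<in> lcar (Wplus m n)"
  show "fW x \<in> C" by (simp add: fW_def)
next
  fix x y :: "(nat \<Rightarrow> 'k mpoly) \<times> 'k mpoly" assume x: "x \<in> lcar (Wplus m n)" and y: "y \<in> lcar (Wplus m n)"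
  obtain b1 s1 where xx: "x = (b1, s1)" by (cases x)
  obtain b2 s2 where yy: "y = (b2, s2)" by (cases y)
  show "fW (ladd (Wplus m n) x y) = fW x \<boxplus> fW y"
    unfolding xx yy by (simp add: fW_def fB_add fS_add add_ac)
next
  fix c and x :: "(nat \<Rightarrow> 'k mpoly) \<times> 'k mpoly" assume x: "x \<in> lcar (Wplus m n)"
  obtain b s where xx: "x = (b, s)" by (cases x)
  show "fW (lsmul (Wplus m n) c x) = c \<star> fW x"
    unfolding xx by (simp add: fW_def fB_pconst fS_pconst sm_add)
next
  fix x y :: "(nat \<Rightarrow> 'k mpoly) \<times> 'k mpoly" assume x: "x \<in> lcar (Wplus m n)" and y: "y \<in> lcar (Wplus m n)"
  obtain b1 s1 where xx: "x = (b1, s1)" by (cases x)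
  obtain b2 s2 where yy: "y = (b2, s2)" by (cases y)
  have s1: "s1 \<in> Tplus_car n" and s2: "s2 \<in> Tplus_car n" using x y xx yy by auto
  have e1: "(\<lambda>j. b1 j * s2 - b2 j * s1) = (\<lambda>j. b1 j * s2 + pconst (-1) * (b2 j * s1))"
    by (simp add: pconst_neg)
  have e2: "s1 * s2 - s2 * s1 = 0" by (simp add: mult.commute)
  have f1: "fB (\<lambda>j. b1 j * s2 - b2 j * s1) = fB (\<lambda>j. b1 j * s2) \<boxplus> (-1) \<star> fB (\<lambda>j. b2 j * s1)"
    unfolding e1 fB_add fB_pconst ..
  have "fW (lbr (Wplus m n) x y) = fB (\<lambda>j. b1 j * s2 - b2 j * s1) \<boxplus> fS (s1 * s2 - s2 * s1)"
    unfolding xx yy by (simp add: fW_def)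
  also have "\<dots> = fB (\<lambda>j. b1 j * s2) \<boxplus> (-1) \<star> fB (\<lambda>j. b2 j * s1)"
    unfolding f1 e2 fS_zero by simp
  also have "\<dots> = br (fB b1) (fS s2) \<boxplus> (-1) \<star> br (fB b2) (fS s1)"
    using s1 s2 by (simp add: fB_fS)
  also have "\<dots> = br (fW x) (fW y)"
    unfolding xx yy fW_def
    by (simp add: br_add_l br_add_r fB_fB fS_fS antisym[of "fB b2" "fS s1"] add_comm)
  finally show "fW (lbr (Wplus m n) x y) = br (fW x) (fW y)" .
qed

lemma fW_gen: "x \<in> gens m n \<Longrightarrow> fW (W_gen x) = h x"
proof -
  assume x: "x \<in> gens m n"
  show ?thesis
  proof (cases x)
    case (GA k)
    then have k: "k \<in> {1..m}" using x by (auto simp: gens_def)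
    have "fB (\<lambda>j. if j = k then 1 else 0) = (\<lambda>ka. Phi ka (if ka = k then 1 else 0)) k"
      unfolding fB_def by (rule lsum_single) (use k in auto)
    also have "\<dots> = Phi k 1" by simp
    also have "\<dots> = hA k" using Phi_single[OF k, of 0 1] k by (simp add: E_zero)
    finally have "fB (\<lambda>j. if j = k then 1 else 0) = hA k" .
    then show ?thesis using GA k by (simp add: fW_def W_gen_def fS_zero)
  next
    case (GT i)
    then have i: "i \<in> {1..n}" using x by (auto simp: gens_def)
    have tpe: "tp n (\<lambda>j. if j = i then 1 else 0) (\<lambda>j. if j = i then 0 else 0) = pvar i"
      using tp_single[OF i, of 1 0] by simp
    have "fS (pvar i) = fS (tp n (\<lambda>j. if j = i then 1 else 0) (\<lambda>j. if j = i then 0 else 0))"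
      unfolding tpe ..
    also have "\<dots> = lsum (\<lambda>j. (if j = i then 1 else 0) \<star> hT j \<boxplus> (if j = i then 0 else 0) \<star> hU j) {1..n}"
      by (rule fS_tp)
    also have "\<dots> = (\<lambda>j. (if j = i then 1 else 0) \<star> hT j \<boxplus> (if j = i then 0 else 0) \<star> hU j) i"
      by (rule lsum_single) (use i in auto)
    also have "\<dots> = hT i" using i by simp
    finally show ?thesis using GT i by (simp add: fW_def W_gen_def fB_zero)
  next
    case (GU i)
    then have i: "i \<in> {1..n}" using x by (auto simp: gens_def)
    have tpe: "tp n (\<lambda>j. if j = i then 0 else 0) (\<lambda>j. if j = i then 1 else 0) = pvar i ^ 2"
      using tp_single[OF i, of 0 1] by simp
    have "fS (pvar i ^ 2) = fS (tp n (\<lambda>j. if j = i then 0 else 0) (\<lambda>j. if j = i then 1 else 0))"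
      unfolding tpe ..
    also have "\<dots> = lsum (\<lambda>j. (if j = i then 0 else 0) \<star> hT j \<boxplus> (if j = i then 1 else 0) \<star> hU j) {1..n}"
      by (rule fS_tp)
    also have "\<dots> = (\<lambda>j. (if j = i then 0 else 0) \<star> hT j \<boxplus> (if j = i then 1 else 0) \<star> hU j) i"
      by (rule lsum_single) (use i in auto)
    also have "\<dots> = hU i" using i by simp
    finally show ?thesis using GU i by (simp add: fW_def W_gen_def fB_zero)
  qed
qed

end


lemma char2: assumes c: "CHAR('k::field) \<noteq> 2" shows "(1::'k) + 1 \<noteq> 0"
proof
  assume e: "(1::'k) + 1 = 0"
  have "(of_nat 2 :: 'k) = 0" using e by simp
  then have d: "CHAR('k) dvd 2" by (simp only: of_nat_eq_0_iff_char_dvd)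
  have le: "CHAR('k) \<le> 2" using dvd_imp_le[OF d] by simp
  have n0: "CHAR('k) \<noteq> 0" using d by (intro notI) simp
  have n1: "CHAR('k) \<noteq> 1"
  proof
    assume "CHAR('k) = 1"
    then have "(of_nat 1 :: 'k) = 0" using of_nat_CHAR[where 'a='k] by simp
    then show False by simp
  qed
  from le n0 n1 c show False by linarith
qed

theorem proposition2:
  fixes m n :: nat
  assumes "CHAR('k::field) \<noteq> 2"
  shows "lie_presentation (Wplus m n :: ('k, (nat \<Rightarrow> 'k mpoly) \<times> 'k mpoly) lie_alg)
           (gens m n) W_gen (rels m n) TYPE('b)"
  unfolding lie_presentation_def
proof (intro conjI allI impI)
  show "is_lie_alg (Wplus m n :: ('k, (nat \<Rightarrow> 'k mpoly) \<times> 'k mpoly) lie_alg)" by (rule W_lie)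
  show "W_gen ` gens m n \<subseteq> lcar (Wplus m n :: ('k, (nat \<Rightarrow> 'k mpoly) \<times> 'k mpoly) lie_alg)"
    using gens_W by blast
  show "\<forall>(p, q)\<in>rels m n. leval (Wplus m n :: ('k, (nat \<Rightarrow> 'k mpoly) \<times> 'k mpoly) lie_alg) W_gen p
     = leval (Wplus m n :: ('k, (nat \<Rightarrow> 'k mpoly) \<times> 'k mpoly) lie_alg) W_gen q"
    by (rule W_rels)
  show "lie_span (Wplus m n :: ('k, (nat \<Rightarrow> 'k mpoly) \<times> 'k mpoly) lie_alg) (W_gen ` gens m n)
     = lcar (Wplus m n :: ('k, (nat \<Rightarrow> 'k mpoly) \<times> 'k mpoly) lie_alg)"
    by (rule W_span)
next
  fix L :: "('k, 'b) lie_alg" and h :: "gen \<Rightarrow> 'b"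
  assume a: "is_lie_alg L \<and> h ` gens m n \<subseteq> lcar L \<and> (\<forall>(p, q)\<in>rels m n. leval L h p = leval L h q)"
  interpret P: pres L m n h
    by (rule pres.intro, rule lie.intro) (use a char2[OF assms] in \<open>auto simp: pres_axioms_def\<close>)
  show "\<exists>f. lie_hom (Wplus m n) L f \<and> (\<forall>x\<in>gens m n. f (W_gen x) = h x)"
    using P.fW_hom P.fW_gen by blast
qed

end
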